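(* Let $f:\mathbb{R}^n\to\mathbb{R}$ be convex, continuously differentiable and locally strongly convex with locally Lipschitz gradient, with $\mathcal{X}^*:=\arg\min f\neq\emptyset$ and optimal value $f^*$. Fix $x^0$, $\alpha_0>0$, $\theta_0>0$, $\tau>1$, $0<\omega\le\frac1{\sqrt2}$, $\gamma_k\in[\gamma_{\min},\gamma_{\max}]\subset(0,\infty)$, and generate $x^{k+1}=x^k-\alpha_k\gamma_k\nabla f(x^k)$ with, for $k\ge1$, $L_k:=\frac{\|\nabla f(x^k)-\nabla f(x^{k-1})\|}{\|x^k-x^{k-1}\|}$, $\alpha_k:=\min\{\frac{\alpha_{k-1}\gamma_{k-1}}{\gamma_k}\sqrt{2(1-\omega^2)+\theta_{k-1}/\tau},\frac{\omega}{\gamma_kL_k}\}$, $\theta_k:=\frac{\alpha_k\gamma_k}{\alpha_{k-1}\gamma_{k-1}}$. Let $\eta:=\mathrm{dist}^2(x^0;\mathcal{X}^* )+2\alpha_0^2\gamma_0^2\|\nabla f(x^0)\|^2+2\alpha_0\gamma_0\theta_0(f(x^0)-f^* )$, $W:=\overline B(0;R)$ with $R>3\sqrt\eta+\mathrm{dist}(x^0;\mathcal{X}^* )+\|x^0\|$, let $L_W>0$ satisfy $\|\nabla f(x)-\nabla f(y)\|\le L_W\|x-y\|$ on $W$, and $\mu_W:=\inf_{x,y\in W,x\neq y}\frac{\langle\nabla f(y)-\nabla f(x),y-x\rangle}{\|y-x\|^2}$. Let $x^*\in\mathcal{X}^*$ and define $$\widehat{\mathcal L}(x^{k+1},x^k):=\|x^{k+1}-x^*\|^2+\Big(\tfrac{\omega^2}{1-\omega^2}+\tfrac{\mu_W}{2\omega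 L_W}\Big)\|x^{k+1}-x^k\|^2+2\alpha_k\gamma_k\Big(1+\tfrac{\theta_k}{2(1-\omega^2)}\Big)(f(x^k)-f^* ),$$ $$\hat q:=\min\Big\{\tfrac{\mu_W}{2}\min\{\alpha_0\gamma_0,\tfrac{\omega}{L_W}\},\ \tfrac{\mu_W(1-\omega^2)}{2\omega^3L_W+\mu_W(1-\omega^2)},\ \tfrac{(\tau-1)m}{\tau(2(1-\omega^2)+m)}\Big\},\quad m:=\min\{\tfrac{\alpha_0\gamma_0\mu_W}{\omega},\tfrac{\mu_W}{L_W}\}.$$ Then $\hat q\in(0,1)$ and $\widehat{\mathcal L}(x^{k+1},x^k)\le(1-\hat q)\widehat{\mathcal L}(x^k,x^{k-1})$ for all $k\in\mathbb{N}$.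
   Context: AdaSGA setting. $f$ is locally strongly convex if every $x$ has $\delta_x>0$, $\mu_x>0$ with $f(y)\ge f(z)+\langle\nabla f(z),y-z\rangle+\frac{\mu_x}{2}\|y-z\|^2$ for all $y,z\in B(x;\delta_x)$. $\mathrm{dist}(x;S)=\inf_{z\in S}\|z-x\|$. *)

theory Defs
  imports "HOL-Analysis.Analysis"
begin

definition locally_strongly_convex :: "('a::real_inner \<Rightarrow> real) \<Rightarrow> ('a \<Rightarrow> 'a) \<Rightarrow> bool" where
  "locally_strongly_convex f g \<longleftrightarrow>
     (\<forall>x. \<exists>\<delta>>0. \<exists>\<mu>>0. \<forall>y\<in>ball x \<delta>. \<forall>z\<in>ball x \<delta>.
        f y \<ge> f z + g z \<bullet> (y - z) + \<mu> / 2 * (norm (y - z))\<^sup>2)"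

definition locally_lipschitz_grad :: "('a::real_normed_vector \<Rightarrow> 'a) \<Rightarrow> bool" where
  "locally_lipschitz_grad g \<longleftrightarrow>
     (\<forall>x. \<exists>\<delta>>0. \<exists>L. \<forall>y\<in>ball x \<delta>. \<forall>z\<in>ball x \<delta>. norm (g y - g z) \<le> L * norm (y - z))"

definition argmin_set :: "('a \<Rightarrow> real) \<Rightarrow> 'a set" where
  "argmin_set f = {x. \<forall>y. f x \<le> f y}"

definition opt_val :: "('a \<Rightarrow> real) \<Rightarrow> real" where
  "opt_val f = Inf (range f)"

end

theory Submission
  imports Defs
begin

lemma key_q:
  fixes \<omega> \<sigma> q \<beta> :: real
  assumes om: "0 < \<omega>" "\<omega>\<^sup>2 \<le> 1/2" and b: "\<beta> = 1 - \<omega>\<^sup>2"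
    and s: "0 < \<sigma>" "\<sigma> \<le> \<omega>" and q: "0 \<le> q" "q \<le> \<sigma>/2"
    and c: "8*\<beta>*q\<^sup>2*(1-q) \<le> \<sigma>\<^sup>2"
  shows "q*(5 - 3*\<omega>) \<le> 2*\<sigma>"
proof (cases "\<omega> \<ge> 1/3")
  case True
  have "q*(5 - 3*\<omega>) \<le> q*4" using True q by (intro mult_left_mono) auto
  then show ?thesis using q by linarith
next
  case False
  have qo: "q \<le> \<omega>/2" using q s by linarith
  have p1: "8*(1-\<omega>\<^sup>2)*(1-\<omega>/2) \<ge> (5-3*\<omega>)\<^sup>2/4"
  proof -
    have "8*(1-\<omega>\<^sup>2)*(1-\<omega>/2) - (5-3*\<omega>)\<^sup>2/4 = 7/4 + 7/2*\<omega> - 41/4*\<omega>\<^sup>2 + 4*\<omega>^3"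
      by (simp add: field_simps power2_eq_square power3_eq_cube)
    also have "\<dots> \<ge> 0"
    proof -
      have "\<omega>\<^sup>2 \<le> \<omega>/3" using False om by (simp add: power2_eq_square mult_left_mono)
      moreover have "\<omega>^3 \<ge> 0" using om by simp
      ultimately show ?thesis using om by linarith
    qed
    finally show ?thesis by linarith
  qed
  have p2: "8*\<beta>*(1-q) \<ge> 8*(1-\<omega>\<^sup>2)*(1-\<omega>/2)"
  proof -
    have "1-\<omega>\<^sup>2 \<ge> 0" using om by linarith
    then show ?thesis unfolding b using qo by (intro mult_left_mono) auto
  qed
  have "(q*(5-3*\<omega>)/2)\<^sup>2 = q\<^sup>2 * ((5-3*\<omega>)\<^sup>2/4)" by (simp add: power2_eq_square)
  also have "\<dots> \<le> q\<^sup>2 * (8*\<beta>*(1-q))" using p1 p2 by (intro mult_left_mono) auto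
  also have "\<dots> \<le> \<sigma>\<^sup>2" using c by (simp add: algebra_simps)
  finally have "(q*(5-3*\<omega>)/2)\<^sup>2 \<le> \<sigma>\<^sup>2" .
  then have "q*(5-3*\<omega>)/2 \<le> \<sigma>" using s by (simp add: power2_le_iff_abs_le)
  then show ?thesis by linarith
qed

lemma scal_D:
  fixes \<omega> \<sigma> q \<beta> :: real
  assumes om: "0 < \<omega>" "\<omega>\<^sup>2 \<le> 1/2" and b: "\<beta> = 1 - \<omega>\<^sup>2"
    and s: "0 < \<sigma>" "\<sigma> \<le> \<omega>" and q: "0 \<le> q" "q \<le> \<sigma>/2"
    and c: "8*\<beta>*q\<^sup>2*(1-q) \<le> \<sigma>\<^sup>2"
  shows "q \<le> (4 - 6*q)*(\<sigma> - \<sigma>\<^sup>2/(2*\<omega>) - q) + 3/2*\<sigma>\<^sup>2/\<beta>"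
proof -
  have key: "q*(5 - 3*\<omega>) \<le> 2*\<sigma>" by (rule key_q[OF om b s q c])
  have o1: "\<omega> \<le> 1"
  proof (rule ccontr)
    assume "\<not> \<omega> \<le> 1"
    then have "1 < \<omega>*\<omega>" using om by (metis less_1_mult not_le)
    then show False using om by (simp add: power2_eq_square)
  qed
  have b0: "0 < \<beta>" "\<beta> \<le> 1" using om b by auto
  have h1: "3/2*\<sigma>\<^sup>2/\<beta> \<ge> 3/2*\<sigma>\<^sup>2"
    using b0 mult_left_le_one_le[of "\<sigma>\<^sup>2" \<beta>] by (simp add: divide_simps)
  have h2: "3/2*\<sigma>\<^sup>2 - 6*q*\<sigma> + 6*q\<^sup>2 \<ge> 0"
  proof -
    have "3/2*\<sigma>\<^sup>2 - 6*q*\<sigma> + 6*q\<^sup>2 = 6*(q - \<sigma>/2)\<^sup>2" by (simp add: power2_eq_square algebra_simps)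
    then show ?thesis by simp
  qed
  have eq: "(4 - 6*q)*(\<sigma> - \<sigma>\<^sup>2/(2*\<omega>) - q) + 3/2*\<sigma>\<^sup>2/\<beta> - q
      = 4*\<sigma> - 5*q - 2*\<sigma>\<^sup>2/\<omega> + 3*q*\<sigma>\<^sup>2/\<omega> + (3/2*\<sigma>\<^sup>2/\<beta> - 6*q*\<sigma> + 6*q\<^sup>2)"
    using om by (simp add: field_simps power2_eq_square)
  have y1: "\<sigma>\<^sup>2/\<omega> \<ge> 2*\<sigma> - \<omega>"
  proof -
    have "\<sigma>\<^sup>2/\<omega> - (2*\<sigma> - \<omega>) = (\<sigma> - \<omega>)\<^sup>2/\<omega>" using om by (simp add: field_simps power2_eq_square)
    also have "\<dots> \<ge> 0" using om by simp
    finally show ?thesis by simp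
  qed
  have y2: "3*q*\<sigma>\<^sup>2/\<omega> \<ge> 3*q*(2*\<sigma> - \<omega>)"
    using mult_left_mono[OF y1, of "3*q"] q by simp
  have m: "4*\<sigma> - 5*q - 2*\<sigma>\<^sup>2/\<omega> + 3*q*\<sigma>\<^sup>2/\<omega> \<ge> 0"
  proof -
    have e2: "4*\<sigma> - 5*q - 2*\<sigma>\<^sup>2/\<omega> + 3*q*(2*\<sigma> - \<omega>) = (4*\<sigma> - 5*q - 3*q*\<omega>) + (\<sigma>/\<omega>)*(6*q*\<omega> - 2*\<sigma>)"
      using om by (simp add: field_simps power2_eq_square)
    have "(4*\<sigma> - 5*q - 3*q*\<omega>) + (\<sigma>/\<omega>)*(6*q*\<omega> - 2*\<sigma>) \<ge> 0"
    proof (cases "6*q*\<omega> - 2*\<sigma> \<ge> 0")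
      case True
      have "(\<sigma>/\<omega>)*(6*q*\<omega> - 2*\<sigma>) \<ge> 0" using True s om by simp
      moreover have "q*(5+3*\<omega>) \<le> (\<sigma>/2)*(5+3*\<omega>)" using q om by (intro mult_right_mono) auto
      moreover have "(\<sigma>/2)*(5+3*\<omega>) \<le> 4*\<sigma>"
      proof -
        have "(\<sigma>/2)*(5+3*\<omega>) \<le> (\<sigma>/2)*(5+3)" using o1 s by (intro mult_left_mono) auto
        then show ?thesis by simp
      qed
      ultimately show ?thesis by (simp add: algebra_simps)
    next
      case False
      have so: "\<sigma>/\<omega> \<le> 1" using s om by simp
      have "(\<sigma>/\<omega>)*(6*q*\<omega> - 2*\<sigma>) \<ge> 1*(6*q*\<omega> - 2*\<sigma>)"
        using False so by (intro mult_right_mono_neg) auto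
      then show ?thesis using key by (simp add: algebra_simps)
    qed
    with e2 y2 show ?thesis by linarith
  qed
  show ?thesis using eq m h1 h2 by linarith
qed

lemma psd2:
  fixes z u :: "'a::real_inner" and A B C :: real
  assumes "0 \<le> A" "0 \<le> C" "B\<^sup>2 \<le> A*C"
  shows "0 \<le> A*(z \<bullet> z) + 2*B*(z \<bullet> u) + C*(u \<bullet> u)"
proof (cases "A = 0")
  case True
  then have "B = 0" using assms by simp
  then show ?thesis using True assms by simp
next
  case False
  then have Ap: "0 < A" using assms by simp
  have "0 \<le> (A *\<^sub>R z + B *\<^sub>R u) \<bullet> (A *\<^sub>R z + B *\<^sub>R u)" by simp
  also have "\<dots> = A*A*(z \<bullet> z) + 2*A*B*(z \<bullet> u) + B*B*(u \<bullet> u)"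
    by (simp add: inner_add_left inner_add_right inner_commute algebra_simps)
  finally have 1: "0 \<le> A*A*(z \<bullet> z) + 2*A*B*(z \<bullet> u) + B*B*(u \<bullet> u)" .
  have 2: "0 \<le> (A*C - B*B)*(u \<bullet> u)" using assms by (simp add: power2_eq_square)
  have "0 \<le> A*(A*(z \<bullet> z) + 2*B*(z \<bullet> u) + C*(u \<bullet> u))"
    using 1 2 by (simp add: algebra_simps)
  then show ?thesis using Ap by (simp add: zero_le_mult_iff)
qed

lemma line_deriv:
  fixes f :: "'a::real_inner \<Rightarrow> real"
  assumes grad: "\<And>z. (f has_derivative (\<lambda>h. g z \<bullet> h)) (at z)"
  shows "((\<lambda>t. f (z + t *\<^sub>R (y - z))) has_real_derivative (g (z + t *\<^sub>R (y - z)) \<bullet> (y - z))) (at t)"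
proof -
  have "((\<lambda>t. z + t *\<^sub>R (y - z)) has_derivative (\<lambda>r. r *\<^sub>R (y - z))) (at t)"
    by (intro derivative_eq_intros) auto
  then have "((\<lambda>t. f (z + t *\<^sub>R (y - z))) has_derivative (\<lambda>r. g (z + t *\<^sub>R (y - z)) \<bullet> (r *\<^sub>R (y - z)))) (at t)"
    by (rule has_derivative_compose) (rule grad)
  then show ?thesis unfolding has_field_derivative_def
    by (rule has_derivative_eq_rhs) (auto simp: fun_eq_iff mult.commute)
qed

lemma grad_ineq:
  fixes f :: "'a::real_inner \<Rightarrow> real"
  assumes cvx: "convex_on UNIV f"
    and grad: "\<And>z. (f has_derivative (\<lambda>h. g z \<bullet> h)) (at z)"
  shows "f x + g x \<bullet> (y - x) \<le> f y"
proof -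
  define \<phi> where "\<phi> = (\<lambda>t::real. f (x + t *\<^sub>R (y - x)))"
  have c: "convex_on UNIV \<phi>"
    unfolding \<phi>_def
  proof (rule convex_onI)
    fix u t1 t2 :: real
    assume u: "0 < u" "u < 1" "t1 \<in> UNIV" "t2 \<in> UNIV"
    have "x + ((1 - u) *\<^sub>R t1 + u *\<^sub>R t2) *\<^sub>R (y - x) = (1 - u) *\<^sub>R (x + t1 *\<^sub>R (y - x)) + u *\<^sub>R (x + t2 *\<^sub>R (y - x))"
      by (simp add: algebra_simps)
    moreover have "f ((1 - u) *\<^sub>R (x + t1 *\<^sub>R (y - x)) + u *\<^sub>R (x + t2 *\<^sub>R (y - x))) \<le> (1 - u) * f (x + t1 *\<^sub>R (y - x)) + u * f (x + t2 *\<^sub>R (y - x))"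
      using convex_onD[OF cvx, of u "x + t1 *\<^sub>R (y - x)" "x + t2 *\<^sub>R (y - x)"] u by simp
    ultimately show "f (x + ((1 - u) *\<^sub>R t1 + u *\<^sub>R t2) *\<^sub>R (y - x)) \<le> (1 - u) * f (x + t1 *\<^sub>R (y - x)) + u * f (x + t2 *\<^sub>R (y - x))"
      by simp
  qed simp
  have d: "(\<phi> has_real_derivative (g x \<bullet> (y - x))) (at 0 within UNIV)"
    using line_deriv[OF grad, of x y 0] unfolding \<phi>_def by simp
  have "\<phi> 1 - \<phi> 0 \<ge> (g x \<bullet> (y - x)) * (1 - 0)"
    by (rule convex_on_imp_above_tangent[OF c]) (use d in auto)
  then show ?thesis unfolding \<phi>_def by simp
qed

lemma seg_in:
  assumes "convex W" "y \<in> W" "z \<in> W" "0 \<le> t" "t \<le> 1"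
  shows "z + t *\<^sub>R (y - z) \<in> W"
proof -
  have "z + t *\<^sub>R (y - z) = (1 - t) *\<^sub>R z + t *\<^sub>R y" by (simp add: algebra_simps)
  then show ?thesis using assms convexD[of W z y "1-t" t] by simp
qed

lemma strong_from_mono:
  fixes f :: "'a::real_inner \<Rightarrow> real"
  assumes grad: "\<And>z. (f has_derivative (\<lambda>h. g z \<bullet> h)) (at z)"
    and W: "convex W" and y: "y \<in> W" and z: "z \<in> W"
    and mono: "\<And>p q. p \<in> W \<Longrightarrow> q \<in> W \<Longrightarrow> \<mu>*(norm (p - q))\<^sup>2 \<le> (g p - g q) \<bullet> (p - q)"
  shows "f z + g z \<bullet> (y - z) + \<mu>/2*(norm (y - z))\<^sup>2 \<le> f y"
proof -
  define \<phi> where "\<phi> = (\<lambda>t. f (z + t *\<^sub>R (y - z)) - t * (g z \<bullet> (y - z)) - \<mu>/2 * t\<^sup>2 * (norm (y - z))\<^sup>2)"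
  have "\<phi> 0 \<le> \<phi> 1"
  proof (rule DERIV_nonneg_imp_nondecreasing[of 0 1])
    fix t :: real assume t: "0 \<le> t" "t \<le> 1"
    define p where "p = z + t *\<^sub>R (y - z)"
    have pW: "p \<in> W" unfolding p_def using seg_in[OF W y z t] .
    have D: "(\<phi> has_real_derivative (g p \<bullet> (y - z) - g z \<bullet> (y - z) - \<mu> * t * (norm (y - z))\<^sup>2)) (at t)"
      unfolding \<phi>_def p_def
      by (rule derivative_eq_intros line_deriv[OF grad] | simp)+
    have nn: "0 \<le> g p \<bullet> (y - z) - g z \<bullet> (y - z) - \<mu> * t * (norm (y - z))\<^sup>2"
    proof (cases "t = 0")
      case True then show ?thesis unfolding p_def by simp
    next
      case False
      then have tp: "0 < t" using t by simp
      have "\<mu>*(norm (p - z))\<^sup>2 \<le> (g p - g z) \<bullet> (p - z)" using mono pW z by blast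
      moreover have "p - z = t *\<^sub>R (y - z)" unfolding p_def by simp
      ultimately have "\<mu>*(norm (t *\<^sub>R (y - z)))\<^sup>2 \<le> (g p - g z) \<bullet> (t *\<^sub>R (y - z))" by simp
      moreover have "(norm (t *\<^sub>R (y - z)))\<^sup>2 = t*t*(norm (y - z))\<^sup>2" using t by (simp add: power2_eq_square)
      ultimately have "t * (\<mu> * t * (norm (y - z))\<^sup>2) \<le> t * ((g p - g z) \<bullet> (y - z))"
        by (simp add: algebra_simps)
      then have "\<mu> * t * (norm (y - z))\<^sup>2 \<le> (g p - g z) \<bullet> (y - z)" using tp by simp
      then show ?thesis by (simp add: inner_diff_left)
    qed
    show "\<exists>y. DERIV \<phi> t :> y \<and> 0 \<le> y" using D nn by blast
  qed simp
  then show ?thesis unfolding \<phi>_def by simp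
qed

lemma descent:
  fixes f :: "'a::real_inner \<Rightarrow> real"
  assumes grad: "\<And>z. (f has_derivative (\<lambda>h. g z \<bullet> h)) (at z)"
    and W: "convex W" and y: "y \<in> W" and z: "z \<in> W"
    and lip: "\<And>p q. p \<in> W \<Longrightarrow> q \<in> W \<Longrightarrow> norm (g p - g q) \<le> L * norm (p - q)"
  shows "f y \<le> f z + g z \<bullet> (y - z) + L/2*(norm (y - z))\<^sup>2"
proof -
  define \<phi> where "\<phi> = (\<lambda>t. t * (g z \<bullet> (y - z)) + L/2 * t\<^sup>2 * (norm (y - z))\<^sup>2 - f (z + t *\<^sub>R (y - z)))"
  have "\<phi> 0 \<le> \<phi> 1"
  proof (rule DERIV_nonneg_imp_nondecreasing[of 0 1])
    fix t :: real assume t: "0 \<le> t" "t \<le> 1"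
    define p where "p = z + t *\<^sub>R (y - z)"
    have pW: "p \<in> W" unfolding p_def using seg_in[OF W y z t] .
    have D: "(\<phi> has_real_derivative (g z \<bullet> (y - z) + L * t * (norm (y - z))\<^sup>2 - g p \<bullet> (y - z))) (at t)"
      unfolding \<phi>_def p_def
      by (rule derivative_eq_intros line_deriv[OF grad] | simp)+
    have nn: "0 \<le> g z \<bullet> (y - z) + L * t * (norm (y - z))\<^sup>2 - g p \<bullet> (y - z)"
    proof -
      have "(g p - g z) \<bullet> (y - z) \<le> norm (g p - g z) * norm (y - z)" by (rule norm_cauchy_schwarz)
      also have "\<dots> \<le> L * norm (p - z) * norm (y - z)" using lip pW z by (intro mult_right_mono) auto
      also have "norm (p - z) = t * norm (y - z)" unfolding p_def using t by simp
      finally have "(g p - g z) \<bullet> (y - z) \<le> L * t * (norm (y - z))\<^sup>2" by (simp add: power2_eq_square algebra_simps)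
      then show ?thesis by (simp add: inner_diff_left)
    qed
    show "\<exists>y. DERIV \<phi> t :> y \<and> 0 \<le> y" using D nn by blast
  qed simp
  then show ?thesis unfolding \<phi>_def by simp
qed

lemma lin4: "(x::real) \<le> w \<Longrightarrow> y = z \<Longrightarrow> w - z = p + v \<Longrightarrow> v \<le> 0 \<Longrightarrow> x - y \<le> p" by linarith

lemma one_step:
  fixes d u G H :: "'a::real_inner" and a h \<mu> L \<omega> \<tau> \<theta>p q Fx Fy m0 :: real
  assumes a: "0 < a" and h: "0 < h" and mu: "0 < \<mu>" "\<mu> \<le> L"
    and om: "0 < \<omega>" "\<omega>\<^sup>2 \<le> 1/2" and tau: "1 < \<tau>" and thp: "0 \<le> \<theta>p"
    and uH: "u = - (a *\<^sub>R H)"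
    and Fx0: "0 \<le> Fx" and Fy0: "0 \<le> Fy"
    and F2: "Fx + \<mu>/2 * (norm d)\<^sup>2 \<le> G \<bullet> d"
    and F3: "Fx + (norm G)\<^sup>2/(2*L) \<le> G \<bullet> d"
    and F4: "- (G \<bullet> u) + \<mu>/2*(norm u)\<^sup>2 \<le> Fy - Fx"
    and F5: "Fy \<le> H \<bullet> (d - u) - \<mu>/2*(norm (d-u))\<^sup>2"
    and F6: "\<mu>*(norm u)\<^sup>2 \<le> (G - H) \<bullet> u"
    and F7: "h * norm (G - H) \<le> \<omega> * norm u"
    and ss: "h\<^sup>2 \<le> a\<^sup>2 * (2*(1-\<omega>\<^sup>2) + \<theta>p/\<tau>)"
    and m0: "0 < m0" "m0 \<le> h" "m0 \<le> a"
    and q: "0 < q" "q \<le> \<mu>/2*m0" "q \<le> \<mu>*(1-\<omega>\<^sup>2)/(2*\<omega>^3*L + \<mu>*(1-\<omega>\<^sup>2))" "q \<le> 1 - 1/\<tau>"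
  shows "(norm (d - h *\<^sub>R G))\<^sup>2 + (\<omega>\<^sup>2/(1-\<omega>\<^sup>2) + \<mu>/(2*\<omega>*L)) * (norm (h *\<^sub>R G))\<^sup>2
           + 2*h*(1 + (h/a)/(2*(1-\<omega>\<^sup>2)))*Fx
         \<le> (1-q) * ((norm d)\<^sup>2 + (\<omega>\<^sup>2/(1-\<omega>\<^sup>2) + \<mu>/(2*\<omega>*L)) * (norm u)\<^sup>2
           + 2*a*(1 + \<theta>p/(2*(1-\<omega>\<^sup>2)))*Fy)"
proof -
  define \<beta> where "\<beta> = 1 - \<omega>\<^sup>2"
  have o1: "\<omega> \<le> 1"
  proof (rule ccontr)
    assume "\<not> \<omega> \<le> 1"
    then have "1 < \<omega>*\<omega>" using om by (metis less_1_mult not_le)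
    then show False using om by (simp add: power2_eq_square)
  qed
  have b0: "1/2 \<le> \<beta>" "\<beta> \<le> 1" "0 < \<beta>" using om unfolding \<beta>_def by auto
  have L0: "0 < L" using mu by linarith
  have H: "H = -(1/a) *\<^sub>R u" using uH a by simp
  define c0 where "c0 = \<omega>\<^sup>2/\<beta>"
  define e where "e = \<mu>/(2*\<omega>*L)"
  define c where "c = c0 + e"
  have cdef: "\<omega>\<^sup>2/(1-\<omega>\<^sup>2) + \<mu>/(2*\<omega>*L) = c" unfolding c_def c0_def e_def \<beta>_def ..
  have e0: "0 < e" unfolding e_def using mu om L0 by simp
  have c00: "0 \<le> c0" unfolding c0_def using b0 by simp
  have onec: "1 + c0 = 1/\<beta>" unfolding c0_def \<beta>_def using b0 unfolding \<beta>_def by (simp add: field_simps)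
  have qc: "c0 \<le> (1-q)*c"
  proof -
    have den: "0 < 2*\<omega>^3*L + \<mu>*\<beta>" using om L0 mu b0 by (simp add: add_pos_pos)
    have "c = (2*\<omega>^3*L + \<mu>*\<beta>)/(2*\<omega>*L*\<beta>)"
      unfolding c_def c0_def e_def using om L0 b0 by (simp add: field_simps power2_eq_square power3_eq_cube)
    moreover have "1 - q \<ge> 2*\<omega>^3*L/(2*\<omega>^3*L + \<mu>*\<beta>)"
    proof -
      have "1 - \<mu>*\<beta>/(2*\<omega>^3*L + \<mu>*\<beta>) = 2*\<omega>^3*L/(2*\<omega>^3*L + \<mu>*\<beta>)"
        using den by (simp add: field_simps)
      then show ?thesis using q(3) unfolding \<beta>_def[symmetric] by linarith
    qed
    ultimately have ceq: "c = (2*\<omega>^3*L + \<mu>*\<beta>)/(2*\<omega>*L*\<beta>)" and le: "2*\<omega>^3*L/(2*\<omega>^3*L + \<mu>*\<beta>) \<le> 1 - q" by auto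
    have cnn: "0 \<le> c" unfolding c_def using c00 e0 by simp
    have "2*\<omega>^3*L/(2*\<omega>^3*L + \<mu>*\<beta>) * c \<le> (1-q)*c" using le cnn by (rule mult_right_mono)
    moreover have "2*\<omega>^3*L/(2*\<omega>^3*L + \<mu>*\<beta>) * c = c0"
    proof -
      have "2*\<omega>^3*L/(2*\<omega>^3*L + \<mu>*\<beta>) * c = (2*\<omega>^3*L)/(2*\<omega>*L*\<beta>)"
        unfolding ceq using den by simp
      also have "\<dots> = c0" unfolding c0_def using om L0 b0 by (simp add: power2_eq_square power3_eq_cube)
      finally show ?thesis .
    qed
    ultimately show "c0 \<le> (1-q)*c" by simp
  qed
  show ?thesis
  proof (cases "u = 0")
    case True
    then have H0: "H = 0" using H by simp
    have "Fy \<le> - \<mu>/2*(norm d)\<^sup>2" using F5 True H0 by simp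
    then have "\<mu>/2*(norm d)\<^sup>2 \<le> 0" using Fy0 by linarith
    then have "(norm d)\<^sup>2 \<le> 0" using mu by (simp add: mult_le_0_iff)
    then have d0: "d = 0" by simp
    have "Fy = 0" using Fy0 \<open>Fy \<le> - \<mu>/2*(norm d)\<^sup>2\<close> d0 by simp
    note d0 = d0 this
    have Fxz: "Fx = 0" using F4 True d0 Fx0 by simp
    have "h * norm (G - H) \<le> 0" using F7 True by simp
    then have "norm (G - H) \<le> 0" using h by (simp add: mult_le_0_iff)
    then have "G = H" by simp
    then have "G = 0" using H0 by simp
    then show ?thesis using d0 Fxz True by simp
  next
    case False
    define nd where "nd = d \<bullet> d"
    define nu where "nu = u \<bullet> u"
    define nG where "nG = G \<bullet> G"
    define gd where "gd = G \<bullet> d"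
    define gu where "gu = G \<bullet> u"
    define ud where "ud = u \<bullet> d"
    have nu0: "0 < nu" unfolding nu_def using False by simp
    have nd0: "0 \<le> nd" unfolding nd_def by simp
    have nG0: "0 \<le> nG" unfolding nG_def by simp
    define \<sigma> where "\<sigma> = h*\<mu>"
    define \<theta> where "\<theta> = h/a"
    have sig0: "0 < \<sigma>" unfolding \<sigma>_def using h mu by simp
    have th0: "0 < \<theta>" unfolding \<theta>_def using h a by simp
    have sigom: "\<sigma> \<le> \<omega>"
    proof -
      have "\<mu>*(norm u)\<^sup>2 \<le> norm (G - H) * norm u" using F6 Cauchy_Schwarz_ineq2[of "G - H" u] by linarith
      then have "\<mu>*norm u \<le> norm (G - H)" using False by (simp add: power2_eq_square)
      then have "h*(\<mu>*norm u) \<le> h * norm (G - H)" using h by (simp add: mult_left_mono)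
      then have "\<sigma> * norm u \<le> \<omega> * norm u" using F7 unfolding \<sigma>_def by (simp add: algebra_simps)
      then show ?thesis using False by simp
    qed
    define t where "t = \<sigma>/(2*\<omega>)"
    have t0: "0 < t" "t \<le> 1/2" unfolding t_def using sig0 om sigom by auto
    have nsq: "(norm v)\<^sup>2 = v \<bullet> v" for v :: 'a by (simp add: power2_norm_eq_inner)
    have F2': "Fx + \<mu>/2*nd \<le> gd" using F2 unfolding nd_def gd_def nsq .
    have F3': "Fx + nG/(2*L) \<le> gd" using F3 unfolding nG_def gd_def nsq .
    have F4': "- gu + \<mu>/2*nu \<le> Fy - Fx" using F4 unfolding nu_def gu_def nsq .
    have F5': "Fy \<le> -(1/a)*(ud - nu) - \<mu>/2*(nd - 2*ud + nu)"
    proof -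
      have "H \<bullet> (d - u) = -(1/a)*(ud - nu)" unfolding H ud_def nu_def
        by (simp add: inner_diff_right inner_commute)
      moreover have "(norm (d-u))\<^sup>2 = nd - 2*ud + nu" unfolding nsq nd_def ud_def nu_def
        by (simp add: inner_diff_left inner_diff_right inner_commute)
      ultimately show ?thesis using F5 by simp
    qed
    have F6': "\<mu>*nu \<le> gu + nu/a"
    proof -
      have "(G - H) \<bullet> u = gu + nu/a" unfolding H gu_def nu_def by (simp add: inner_diff_left inner_add_left)
      then show ?thesis using F6 unfolding nsq nu_def by simp
    qed
    have F7': "h\<^sup>2*nG + 2*(h\<^sup>2/a)*gu + (h\<^sup>2/a\<^sup>2)*nu \<le> \<omega>\<^sup>2*nu"
    proof -
      have "(h * norm (G - H))\<^sup>2 \<le> (\<omega> * norm u)\<^sup>2" using F7 h by (intro power_mono) auto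
      moreover have "(h * norm (G - H))\<^sup>2 = h\<^sup>2*nG + 2*(h\<^sup>2/a)*gu + (h\<^sup>2/a\<^sup>2)*nu"
        unfolding power_mult_distrib nsq H nG_def gu_def nu_def using a
        by (simp add: inner_add_left inner_add_right inner_commute algebra_simps power2_eq_square)
      moreover have "(\<omega> * norm u)\<^sup>2 = \<omega>\<^sup>2*nu" unfolding power_mult_distrib nsq nu_def ..
      ultimately show ?thesis by simp
    qed
    have LHS1: "(norm (d - h *\<^sub>R G))\<^sup>2 = nd - 2*h*gd + h\<^sup>2*nG"
      unfolding nsq nd_def gd_def nG_def
      by (simp add: inner_diff_left inner_diff_right inner_commute power2_eq_square algebra_simps)
    have LHS2: "(norm (h *\<^sub>R G))\<^sup>2 = h\<^sup>2*nG" unfolding nsq nG_def by (simp add: power2_eq_square)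
    have S1: "2*h*Fx + (1-t)*\<sigma>*nd + e*(h\<^sup>2*nG) \<le> 2*h*gd"
    proof -
      have a1: "2*h*(1-t)*(Fx + \<mu>/2*nd) \<le> 2*h*(1-t)*gd"
        using F2' h t0 by (intro mult_left_mono) auto
      have a2: "2*h*t*(Fx + nG/(2*L)) \<le> 2*h*t*gd"
        using F3' h t0 by (intro mult_left_mono) auto
      have "2*h*t*(nG/(2*L)) = e*(h\<^sup>2*nG)"
        unfolding t_def e_def \<sigma>_def using om L0 by (simp add: field_simps power2_eq_square)
      then show ?thesis using a1 a2 unfolding \<sigma>_def by (simp add: algebra_simps)
    qed
    have S3: "h\<^sup>2*nG + (h\<^sup>2/a)*Fx \<le> (\<omega>\<^sup>2 - 3/2*\<theta>*\<sigma>)*nu + (h\<^sup>2/a)*Fy"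
    proof -
      define K where "K = h\<^sup>2/a"
      define J where "J = h\<^sup>2/a\<^sup>2"
      have K0: "0 \<le> K" unfolding K_def using a by simp
      have KJ: "K*(nu/a) = J*nu" unfolding K_def J_def by (simp add: power2_eq_square)
      have b1: "K*(\<mu>*nu) \<le> K*gu + J*nu"
      proof -
        have "K*(\<mu>*nu) \<le> K*(gu + nu/a)" using F6' K0 by (rule mult_left_mono)
        then show ?thesis using KJ by (simp add: distrib_left)
      qed
      have b2: "K*Fx \<le> K*Fy + K*gu - (K*(\<mu>*nu))/2"
      proof -
        have "K*(- gu + \<mu>/2*nu) \<le> K*(Fy - Fx)" using F4' K0 by (rule mult_left_mono)
        then show ?thesis by (simp add: algebra_simps)
      qed
      have b3: "h\<^sup>2*nG + 2*(K*gu) + J*nu \<le> \<omega>\<^sup>2*nu" using F7' unfolding K_def J_def by (simp add: algebra_simps)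
      have th: "(\<omega>\<^sup>2 - 3/2*\<theta>*\<sigma>)*nu = \<omega>\<^sup>2*nu - 3/2*(K*(\<mu>*nu))"
        unfolding \<theta>_def \<sigma>_def K_def by (simp add: power2_eq_square algebra_simps)
      show ?thesis unfolding th K_def[symmetric] using b1 b2 b3 by linarith
    qed
    have S4: "(norm (d - h *\<^sub>R G))\<^sup>2 + c * (norm (h *\<^sub>R G))\<^sup>2 + 2*h*(1 + (h/a)/(2*\<beta>))*Fx
        \<le> (1 - (1-t)*\<sigma>)*nd + ((\<omega>\<^sup>2 - 3/2*\<theta>*\<sigma>)/\<beta>)*nu + (h\<^sup>2/(a*\<beta>))*Fy"
    proof -
      have eqL: "(norm (d - h *\<^sub>R G))\<^sup>2 + c * (norm (h *\<^sub>R G))\<^sup>2 + 2*h*(1 + (h/a)/(2*\<beta>))*Fx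
          = nd - 2*h*gd + (1 + c)*(h\<^sup>2*nG) + 2*h*Fx + (h\<^sup>2/a)*Fx/\<beta>"
        unfolding LHS1 LHS2 using a b0 by (simp add: field_simps power2_eq_square)
      have "(1 + c0)*(h\<^sup>2*nG + (h\<^sup>2/a)*Fx) \<le> (1+c0)*((\<omega>\<^sup>2 - 3/2*\<theta>*\<sigma>)*nu + (h\<^sup>2/a)*Fy)"
        using S3 c00 by (intro mult_left_mono) auto
      then have S3b: "(h\<^sup>2*nG + (h\<^sup>2/a)*Fx)/\<beta> \<le> ((\<omega>\<^sup>2 - 3/2*\<theta>*\<sigma>)*nu + (h\<^sup>2/a)*Fy)/\<beta>"
        unfolding onec by simp
      have e1: "(h\<^sup>2*nG + (h\<^sup>2/a)*Fx)/\<beta> = (1+c0)*(h\<^sup>2*nG) + (h\<^sup>2/a)*Fx/\<beta>"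
        unfolding onec using a b0 by (simp add: field_simps)
      have e2: "((\<omega>\<^sup>2 - 3/2*\<theta>*\<sigma>)*nu + (h\<^sup>2/a)*Fy)/\<beta> = ((\<omega>\<^sup>2 - 3/2*\<theta>*\<sigma>)/\<beta>)*nu + (h\<^sup>2/(a*\<beta>))*Fy"
        using a b0 by (simp add: field_simps)
      have cc: "1 + c = 1 + c0 + e" unfolding c_def by simp
      show ?thesis unfolding eqL using S1 S3b e1 e2 cc by (simp add: algebra_simps)
    qed
    define Sd where "Sd = (1-t)*\<sigma> - q"
    define Su where "Su = (1-q)*c - (\<omega>\<^sup>2 - 3/2*\<theta>*\<sigma>)/\<beta>"
    define ex where "ex = h\<^sup>2/(a*\<beta>) - (1-q)*(2*a*(1 + \<theta>p/(2*\<beta>)))"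
    have qs: "q \<le> \<sigma>/2"
    proof -
      have "\<mu>/2*m0 \<le> \<mu>/2*h" using m0 mu by (intro mult_left_mono) auto
      then show ?thesis using q unfolding \<sigma>_def by (simp add: algebra_simps)
    qed
    have qa: "2*q \<le> \<mu>*a"
    proof -
      have "\<mu>/2*m0 \<le> \<mu>/2*a" using m0 mu by (intro mult_left_mono) auto
      then show ?thesis using q by (simp add: algebra_simps)
    qed
    have Sd0: "0 \<le> Sd"
    proof -
      have "(1/2)*\<sigma> \<le> (1-t)*\<sigma>" using t0 sig0 by (intro mult_right_mono) auto
      then show ?thesis unfolding Sd_def using qs by simp
    qed
    have Su1: "3/2*\<theta>*\<sigma>/\<beta> \<le> Su"
    proof -
      have "(\<omega>\<^sup>2 - 3/2*\<theta>*\<sigma>)/\<beta> = c0 - 3/2*\<theta>*\<sigma>/\<beta>" unfolding c0_def by (simp add: diff_divide_distrib)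
      then show ?thesis unfolding Su_def using qc by simp
    qed
    have "0 \<le> 3/2*\<theta>*\<sigma>/\<beta>" using th0 sig0 b0 by simp
    then have Su0: "0 \<le> Su" using Su1 by linarith
    have main: "ex*Fy \<le> Sd*nd + Su*nu"
    proof (cases "ex \<le> 0")
      case True
      then have "ex*Fy \<le> 0" using Fy0 by (simp add: mult_nonpos_nonneg)
      moreover have "0 \<le> Sd*nd + Su*nu" using Sd0 Su0 nd0 nu0 by simp
      ultimately show ?thesis by linarith
    next
      case False
      then have ex0: "0 < ex" by simp
      have exle: "ex \<le> 2*a*q"
      proof -
        have "h\<^sup>2/(a*\<beta>) \<le> a\<^sup>2 * (2*\<beta> + \<theta>p/\<tau>)/(a*\<beta>)"
          using ss a b0 unfolding \<beta>_def by (intro divide_right_mono) auto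
        also have "\<dots> = a*(2*\<beta> + \<theta>p/\<tau>)/\<beta>" using a by (simp add: power2_eq_square)
        finally have 1: "h\<^sup>2/(a*\<beta>) \<le> a*(2*\<beta> + \<theta>p/\<tau>)/\<beta>" .
        have 2: "(1-q)*(2*a*(1 + \<theta>p/(2*\<beta>))) = (1-q)*a*(2*\<beta> + \<theta>p)/\<beta>"
          using b0 by (simp add: field_simps)
        have 3: "a*(2*\<beta> + \<theta>p/\<tau>)/\<beta> - (1-q)*a*(2*\<beta> + \<theta>p)/\<beta> = 2*a*q + (a/\<beta>)*(\<theta>p*(1/\<tau> - 1 + q))"
          using b0 by (simp add: field_simps)
        have "(a/\<beta>)*(\<theta>p*(1/\<tau> - 1 + q)) \<le> 0"
        proof -
          have "\<theta>p*(1/\<tau> - 1 + q) \<le> 0" using thp q(4) by (simp add: mult_nonneg_nonpos)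
          moreover have "0 \<le> a/\<beta>" using a b0 by simp
          ultimately show ?thesis using mult_nonneg_nonpos by blast
        qed
        then show ?thesis unfolding ex_def using lin4[OF 1 2 3] by blast
      qed
      have thq: "2*\<beta>*(1-q) \<le> \<theta>\<^sup>2"
      proof -
        have q1: "q < 1" using qs sigom o1 by linarith
        have "(1-q)*(2*a) \<le> (1-q)*(2*a*(1 + \<theta>p/(2*\<beta>)))"
          using q1 a thp b0 by (intro mult_left_mono) (auto simp: field_simps)
        also have "\<dots> < h\<^sup>2/(a*\<beta>)" using ex0 unfolding ex_def by simp
        finally have "(1-q)*(2*a)*(a*\<beta>) < h\<^sup>2" using a b0 by (simp add: field_simps)
        then have "2*\<beta>*(1-q)*a\<^sup>2 \<le> h\<^sup>2" by (simp add: power2_eq_square algebra_simps)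
        then have "2*\<beta>*(1-q) \<le> h\<^sup>2/a\<^sup>2" using a by (simp add: field_simps)
        then show ?thesis unfolding \<theta>_def by (simp add: power_divide)
      qed
      have tq: "2*\<theta>*q \<le> \<sigma>"
      proof -
        have "\<theta>*(2*q) \<le> \<theta>*(\<mu>*a)" using qa th0 by (intro mult_left_mono) auto
        moreover have "\<theta>*(\<mu>*a) = \<sigma>" unfolding \<theta>_def \<sigma>_def using a by simp
        ultimately show ?thesis by simp
      qed
      have c8: "8*\<beta>*q\<^sup>2*(1-q) \<le> \<sigma>\<^sup>2"
      proof -
        have "8*\<beta>*q\<^sup>2*(1-q) = 4*q\<^sup>2*(2*\<beta>*(1-q))" by (simp add: algebra_simps)
        also have "\<dots> \<le> 4*q\<^sup>2*\<theta>\<^sup>2" using thq by (intro mult_left_mono) auto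
        also have "\<dots> = (2*\<theta>*q)\<^sup>2" by (simp add: power2_eq_square algebra_simps)
        also have "\<dots> \<le> \<sigma>\<^sup>2" using tq th0 q by (intro power_mono) auto
        finally show ?thesis .
      qed
      have sD: "q \<le> (4 - 6*q)*(\<sigma> - \<sigma>\<^sup>2/(2*\<omega>) - q) + 3/2*\<sigma>\<^sup>2/\<beta>"
        by (rule scal_D[OF om \<beta>_def sig0 sigom _ qs c8]) (use q in simp)
      have Xeq: "\<sigma> - \<sigma>\<^sup>2/(2*\<omega>) - q = Sd" unfolding Sd_def t_def using om by (simp add: field_simps power2_eq_square)
      have Su6: "6*(1-q)*q \<le> Su"
      proof -
        have "3*\<theta>\<^sup>2*q/\<beta> \<le> 3/2*\<theta>*\<sigma>/\<beta>"
        proof -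
          have "3*\<theta>\<^sup>2*q = 3/2*\<theta>*(2*\<theta>*q)" by (simp add: power2_eq_square)
          also have "\<dots> \<le> 3/2*\<theta>*\<sigma>" using tq th0 by (intro mult_left_mono) auto
          finally show ?thesis using b0 by (intro divide_right_mono) auto
        qed
        moreover have "6*(1-q)*q \<le> 3*\<theta>\<^sup>2*q/\<beta>"
        proof -
          have "3*(2*\<beta>*(1-q))*q \<le> 3*\<theta>\<^sup>2*q" using thq q by (intro mult_right_mono) auto
          then have "3*(2*\<beta>*(1-q))*q/\<beta> \<le> 3*\<theta>\<^sup>2*q/\<beta>" using b0 by (intro divide_right_mono) auto
          moreover have "3*(2*\<beta>*(1-q))*q/\<beta> = 6*(1-q)*q" using b0 by (simp add: field_simps)
          ultimately show ?thesis by simp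
        qed
        ultimately show ?thesis using Su1 by linarith
      qed
      have aqsu: "3/2*q*\<sigma>\<^sup>2/\<beta> \<le> a*q*\<mu>*Su"
      proof -
        have "3/2*q*\<sigma>\<^sup>2/\<beta> = a*q*\<mu>*(3/2*\<theta>*\<sigma>/\<beta>)"
          unfolding \<theta>_def \<sigma>_def using a by (simp add: power2_eq_square field_simps)
        also have "\<dots> \<le> a*q*\<mu>*Su" using Su1 a q mu by (intro mult_left_mono) auto
        finally show ?thesis .
      qed
      have psdc: "(Sd + q)\<^sup>2 \<le> (Sd + a*q*\<mu>)*(Sd + Su)"
      proof -
        have "q*q \<le> q*((4 - 6*q)*Sd + 3/2*\<sigma>\<^sup>2/\<beta>)" using sD Xeq q by (intro mult_left_mono) auto
        then have A1: "q*q \<le> (4-6*q)*q*Sd + 3/2*q*\<sigma>\<^sup>2/\<beta>" by (simp add: algebra_simps)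
        have A2: "6*(1-q)*q*Sd \<le> Su*Sd" using Su6 Sd0 by (rule mult_right_mono)
        have A3: "0 \<le> a*q*\<mu>*Sd" using a q mu Sd0 by simp
        have "(Sd + q)\<^sup>2 = Sd*Sd + 2*Sd*q + q*q" by (simp add: power2_eq_square algebra_simps)
        moreover have "(Sd + a*q*\<mu>)*(Sd + Su) = Sd*Sd + Su*Sd + a*q*\<mu>*Sd + a*q*\<mu>*Su" by (simp add: algebra_simps)
        moreover have "(4-6*q)*q*Sd = 4*q*Sd - 6*q*q*Sd" "6*(1-q)*q*Sd = 6*q*Sd - 6*q*q*Sd" by (simp_all add: algebra_simps)
        ultimately show ?thesis using A1 A2 A3 aqsu by (simp add: algebra_simps)
      qed
      define B where "B = -(1/a)*(ud - nu) - \<mu>/2*(nd - 2*ud + nu)"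
      have FyB: "Fy \<le> B" using F5' unfolding B_def .
      show ?thesis
      proof (cases "B \<le> 0")
        case True
        have "ex*Fy \<le> ex*B" using FyB ex0 by (intro mult_left_mono) auto
        also have "\<dots> \<le> 0" using True ex0 by (simp add: mult_nonneg_nonpos)
        also have "\<dots> \<le> Sd*nd + Su*nu" using Sd0 Su0 nd0 nu0 by simp
        finally show ?thesis .
      next
        case False
        have "ex*Fy \<le> ex*B" using FyB ex0 by (intro mult_left_mono) auto
        also have "\<dots> \<le> (2*a*q)*B" using exle False by (intro mult_right_mono) auto
        also have "\<dots> \<le> Sd*nd + Su*nu"
        proof -
          have P: "0 \<le> (Sd + a*q*\<mu>)*((d-u) \<bullet> (d-u)) + 2*(Sd+q)*((d-u) \<bullet> u) + (Sd + Su)*(u \<bullet> u)"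
            by (rule psd2) (use Sd0 a q mu Su0 psdc in auto)
          have z1: "(d-u) \<bullet> (d-u) = nd - 2*ud + nu" unfolding nd_def ud_def nu_def
            by (simp add: inner_diff_left inner_diff_right inner_commute)
          have z2: "(d-u) \<bullet> u = ud - nu" unfolding ud_def nu_def by (simp add: inner_diff_left inner_diff_right inner_commute)
          have "Sd*nd + Su*nu - (2*a*q)*B = (Sd + a*q*\<mu>)*(nd - 2*ud + nu) + 2*(Sd+q)*(ud - nu) + (Sd + Su)*nu"
            unfolding B_def using a by (simp add: field_simps)
          then show ?thesis using P unfolding z1 z2 nu_def[symmetric] by linarith
        qed
        finally show ?thesis .
      qed
    qed
    have fin: "(1-q) * ((norm d)\<^sup>2 + c * (norm u)\<^sup>2 + 2*a*(1 + \<theta>p/(2*\<beta>))*Fy)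
       = ((1 - (1-t)*\<sigma>)*nd + ((\<omega>\<^sup>2 - 3/2*\<theta>*\<sigma>)/\<beta>)*nu + (h\<^sup>2/(a*\<beta>))*Fy) + (Sd*nd + Su*nu - ex*Fy)"
      unfolding Sd_def Su_def ex_def nsq nd_def[symmetric] nu_def[symmetric] by (simp add: algebra_simps)
    have "(norm (d - h *\<^sub>R G))\<^sup>2 + c * (norm (h *\<^sub>R G))\<^sup>2 + 2*h*(1 + (h/a)/(2*\<beta>))*Fx
        \<le> (1-q) * ((norm d)\<^sup>2 + c * (norm u)\<^sup>2 + 2*a*(1 + \<theta>p/(2*\<beta>))*Fy)"
      using S4 main unfolding fin by linarith
    then show ?thesis unfolding cdef \<beta>_def .
  qed
qed

lemma mu_pos:
  fixes f :: "'a::euclidean_space \<Rightarrow> real" and g :: "'a \<Rightarrow> 'a"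
  assumes lsc: "\<forall>x. \<exists>\<delta>>0. \<exists>\<mu>>0. \<forall>y\<in>ball x \<delta>. \<forall>z\<in>ball x \<delta>.
        f y \<ge> f z + g z \<bullet> (y - z) + \<mu> / 2 * (norm (y - z))\<^sup>2"
    and W: "compact W" "convex W"
  shows "\<exists>\<mu>'>0. \<forall>y\<in>W. \<forall>z\<in>W. \<mu>'*(norm (y - z))\<^sup>2 \<le> (g y - g z) \<bullet> (y - z)"
proof -
  have "\<forall>x. \<exists>p. fst p > 0 \<and> snd p > 0 \<and> (\<forall>y\<in>ball x (fst p). \<forall>z\<in>ball x (fst p).
        f y \<ge> f z + g z \<bullet> (y - z) + snd p / 2 * (norm (y - z))\<^sup>2)"
    using lsc by (metis fst_conv snd_conv)
  then obtain P where P: "\<And>x. fst (P x) > 0 \<and> snd (P x) > 0 \<and> (\<forall>y\<in>ball x (fst (P x)). \<forall>z\<in>ball x (fst (P x)).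
        f y \<ge> f z + g z \<bullet> (y - z) + snd (P x) / 2 * (norm (y - z))\<^sup>2)"
    by metis
  define D where "D x = fst (P x)" for x
  define M where "M x = snd (P x)" for x
  have D0: "D x > 0" and M0: "M x > 0" for x using P unfolding D_def M_def by auto
  have locmono: "M x * (norm (y - z))\<^sup>2 \<le> (g y - g z) \<bullet> (y - z)" if "y \<in> ball x (D x)" "z \<in> ball x (D x)" for x y z
  proof -
    have 1: "f y \<ge> f z + g z \<bullet> (y - z) + M x / 2 * (norm (y - z))\<^sup>2" using P that unfolding D_def M_def by blast
    have 2: "f z \<ge> f y + g y \<bullet> (z - y) + M x / 2 * (norm (z - y))\<^sup>2" using P that unfolding D_def M_def by blast
    have "norm (z - y) = norm (y - z)" by (rule norm_minus_commute)
    moreover have "g y \<bullet> (z - y) = - (g y \<bullet> (y - z))" by (simp add: inner_diff_right)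
    ultimately show ?thesis using 1 2 by (simp add: inner_diff_left)
  qed
  show ?thesis
  proof (cases "W = {}")
    case True then show ?thesis by (intro exI[of _ 1]) auto
  next
    case False
    have cov: "W \<subseteq> (\<Union>c\<in>W. ball c (D c / 2))" using D0 by auto
    obtain C where C: "C \<subseteq> W" "finite C" "W \<subseteq> (\<Union>c\<in>C. ball c (D c / 2))"
      using compactE_image[OF W(1), of W "\<lambda>c. ball c (D c / 2)"] cov by auto
    have Cne: "C \<noteq> {}" using C False by auto
    define \<delta>0 where "\<delta>0 = Min ((\<lambda>c. D c / 2) ` C)"
    define \<mu>0 where "\<mu>0 = Min (M ` C)"
    have d0: "\<delta>0 > 0" unfolding \<delta>0_def using C Cne D0 by (subst Min_gr_iff) auto
    have m0: "\<mu>0 > 0" unfolding \<mu>0_def using C Cne M0 by (subst Min_gr_iff) auto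
    have near: "\<mu>0 * (norm (p - q))\<^sup>2 \<le> (g p - g q) \<bullet> (p - q)" if pq: "p \<in> W" "norm (p - q) < \<delta>0" for p q
    proof -
      obtain c where c: "c \<in> C" "p \<in> ball c (D c / 2)" using C pq by auto
      have "\<delta>0 \<le> D c / 2" unfolding \<delta>0_def using C c by (intro Min_le) auto
      moreover have "dist c q \<le> dist c p + dist p q" by (rule dist_triangle)
      moreover have "dist p q = norm (p - q)" by (simp add: dist_norm)
      ultimately have "q \<in> ball c (D c)" using c pq by simp
      moreover have "p \<in> ball c (D c)" using c D0[of c] by auto
      ultimately have "M c * (norm (p - q))\<^sup>2 \<le> (g p - g q) \<bullet> (p - q)" using locmono by blast
      moreover have "\<mu>0 \<le> M c" unfolding \<mu>0_def using C c by (intro Min_le) auto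
      then have "\<mu>0 * (norm (p - q))\<^sup>2 \<le> M c * (norm (p - q))\<^sup>2" by (intro mult_right_mono) auto
      ultimately show ?thesis by linarith
    qed
    have glob: "\<mu>0 * (norm (y - z))\<^sup>2 \<le> (g y - g z) \<bullet> (y - z)" if yz: "y \<in> W" "z \<in> W" for y z
    proof -
      obtain N :: nat where N: "norm (y - z) / \<delta>0 < real N" using reals_Archimedean2 by blast
      have Npos: "0 < N" using N d0 by (cases N) (auto simp: divide_less_0_iff)
      define p where "p i = z + (real i / real N) *\<^sub>R (y - z)" for i
      have pW: "p i \<in> W" if "i \<le> N" for i
        unfolding p_def using that Npos by (intro seg_in[OF W(2) yz]) auto
      have p0: "p 0 = z" and pN: "p N = y" unfolding p_def using Npos by auto
      have nl: "norm (y - z) / real N < \<delta>0"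
        using N d0 Npos by (simp add: field_simps)
      have step: "\<mu>0 * (norm (y - z))\<^sup>2 / real N \<le> (g (p (Suc i)) - g (p i)) \<bullet> (y - z)" if i: "i < N" for i
      proof -
        have dif0: "p (Suc i) - p i = (real (Suc i) / real N - real i / real N) *\<^sub>R (y - z)"
          unfolding p_def by (simp add: scaleR_diff_left)
        have "real (Suc i) / real N - real i / real N = 1 / real N"
          by (simp add: diff_divide_distrib[symmetric])
        then have dif: "p (Suc i) - p i = (1 / real N) *\<^sub>R (y - z)" using dif0 by simp
        have "norm (p (Suc i) - p i) < \<delta>0" unfolding dif using nl Npos by simp
        then have "\<mu>0 * (norm (p (Suc i) - p i))\<^sup>2 \<le> (g (p (Suc i)) - g (p i)) \<bullet> (p (Suc i) - p i)"
          using near pW i by simp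
        then have "\<mu>0 * ((norm (y - z))\<^sup>2 / (real N)\<^sup>2) \<le> (1 / real N) * ((g (p (Suc i)) - g (p i)) \<bullet> (y - z))"
          unfolding dif using Npos by (simp add: power_divide)
        then have "real N * (\<mu>0 * ((norm (y - z))\<^sup>2 / (real N)\<^sup>2)) \<le> real N * ((1 / real N) * ((g (p (Suc i)) - g (p i)) \<bullet> (y - z)))"
          using Npos by (intro mult_left_mono) auto
        then show ?thesis using Npos by (simp add: power2_eq_square field_simps)
      qed
      have "(g y - g z) \<bullet> (y - z) = (\<Sum>i<N. g (p (Suc i)) - g (p i)) \<bullet> (y - z)"
        using sum_lessThan_telescope[of "\<lambda>i. g (p i)" N] p0 pN by simp
      also have "\<dots> = (\<Sum>i<N. (g (p (Suc i)) - g (p i)) \<bullet> (y - z))" by (rule inner_sum_left)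
      also have "\<dots> \<ge> (\<Sum>i<N. \<mu>0 * (norm (y - z))\<^sup>2 / real N)" by (rule sum_mono) (use step in auto)
      also have "(\<Sum>i<N. \<mu>0 * (norm (y - z))\<^sup>2 / real N) = \<mu>0 * (norm (y - z))\<^sup>2" using Npos by simp
      finally show ?thesis .
    qed
    show ?thesis using glob m0 by blast
  qed
qed

lemma energy_step:
  fixes d u G H :: "'a::real_inner" and a h \<omega> \<tau> \<theta>p Fx Fy :: real
  assumes a: "0 < a" and h: "0 < h" and om: "0 < \<omega>" "\<omega>\<^sup>2 \<le> 1/2" and tau: "1 < \<tau>" and thp: "0 \<le> \<theta>p"
    and uH: "u = - (a *\<^sub>R H)" and Fy0: "0 \<le> Fy"
    and E2: "Fx \<le> G \<bullet> d"
    and E4: "- (G \<bullet> u) \<le> Fy - Fx"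
    and E6: "0 \<le> (G - H) \<bullet> u"
    and E7: "h * norm (G - H) \<le> \<omega> * norm u"
    and ss: "h\<^sup>2 \<le> a\<^sup>2 * (2*(1-\<omega>\<^sup>2) + \<theta>p/\<tau>)"
  shows "(norm (d - h *\<^sub>R G))\<^sup>2 + (\<omega>\<^sup>2/(1-\<omega>\<^sup>2)) * (norm (h *\<^sub>R G))\<^sup>2 + 2*h*(1 + (h/a)/(2*(1-\<omega>\<^sup>2)))*Fx
     \<le> (norm d)\<^sup>2 + (\<omega>\<^sup>2/(1-\<omega>\<^sup>2)) * (norm u)\<^sup>2 + 2*a*(1 + \<theta>p/(2*(1-\<omega>\<^sup>2)))*Fy"
proof -
  define \<beta> where "\<beta> = 1 - \<omega>\<^sup>2"
  have b0: "1/2 \<le> \<beta>" "0 < \<beta>" using om unfolding \<beta>_def by auto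
  define c0 where "c0 = \<omega>\<^sup>2/\<beta>"
  have c00: "0 \<le> c0" unfolding c0_def using b0 by simp
  have onec: "1 + c0 = 1/\<beta>" unfolding c0_def \<beta>_def using b0 unfolding \<beta>_def by (simp add: field_simps)
  have H: "H = -(1/a) *\<^sub>R u" using uH a by simp
  define nd where "nd = d \<bullet> d"
  define nu where "nu = u \<bullet> u"
  define nG where "nG = G \<bullet> G"
  define gd where "gd = G \<bullet> d"
  define gu where "gu = G \<bullet> u"
  have nsq: "(norm v)\<^sup>2 = v \<bullet> v" for v :: 'a by (simp add: power2_norm_eq_inner)
  have E6': "0 \<le> gu + nu/a"
  proof -
    have "(G - H) \<bullet> u = gu + nu/a" unfolding H gu_def nu_def by (simp add: inner_diff_left inner_add_left)
    then show ?thesis using E6 by simp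
  qed
  have E7': "h\<^sup>2*nG + 2*(h\<^sup>2/a)*gu + (h\<^sup>2/a\<^sup>2)*nu \<le> \<omega>\<^sup>2*nu"
  proof -
    have "(h * norm (G - H))\<^sup>2 \<le> (\<omega> * norm u)\<^sup>2" using E7 h by (intro power_mono) auto
    moreover have "(h * norm (G - H))\<^sup>2 = h\<^sup>2*nG + 2*(h\<^sup>2/a)*gu + (h\<^sup>2/a\<^sup>2)*nu"
      unfolding power_mult_distrib nsq H nG_def gu_def nu_def using a
      by (simp add: inner_add_left inner_add_right inner_commute algebra_simps power2_eq_square)
    moreover have "(\<omega> * norm u)\<^sup>2 = \<omega>\<^sup>2*nu" unfolding power_mult_distrib nsq nu_def ..
    ultimately show ?thesis by simp
  qed
  have LHS1: "(norm (d - h *\<^sub>R G))\<^sup>2 = nd - 2*h*gd + h\<^sup>2*nG"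
    unfolding nsq nd_def gd_def nG_def
    by (simp add: inner_diff_left inner_diff_right inner_commute power2_eq_square algebra_simps)
  have LHS2: "(norm (h *\<^sub>R G))\<^sup>2 = h\<^sup>2*nG" unfolding nsq nG_def by (simp add: power2_eq_square)
  have S3: "h\<^sup>2*nG + (h\<^sup>2/a)*Fx \<le> \<omega>\<^sup>2*nu + (h\<^sup>2/a)*Fy"
  proof -
    define K where "K = h\<^sup>2/a"
    define J where "J = h\<^sup>2/a\<^sup>2"
    have K0: "0 \<le> K" unfolding K_def using a by simp
    have KJ: "K*(nu/a) = J*nu" unfolding K_def J_def by (simp add: power2_eq_square)
    have b1: "0 \<le> K*gu + J*nu"
    proof -
      have "0 \<le> K*(gu + nu/a)" using E6' K0 by simp
      then show ?thesis using KJ by (simp add: distrib_left)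
    qed
    have b2: "K*Fx \<le> K*Fy + K*gu"
    proof -
      have "K*(- (G \<bullet> u)) \<le> K*(Fy - Fx)" using E4 K0 by (rule mult_left_mono)
      then show ?thesis unfolding gu_def by (simp add: algebra_simps)
    qed
    have b3: "h\<^sup>2*nG + 2*(K*gu) + J*nu \<le> \<omega>\<^sup>2*nu" using E7' unfolding K_def J_def by (simp add: algebra_simps)
    show ?thesis unfolding K_def[symmetric] using b1 b2 b3 by linarith
  qed
  have S3a: "(h\<^sup>2*nG + (h\<^sup>2/a)*Fx)/\<beta> \<le> (\<omega>\<^sup>2*nu + (h\<^sup>2/a)*Fy)/\<beta>"
    using S3 b0 by (intro divide_right_mono) auto
  have e1: "(h\<^sup>2*nG + (h\<^sup>2/a)*Fx)/\<beta> = (1+c0)*(h\<^sup>2*nG) + (h\<^sup>2/a)*Fx/\<beta>"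
    unfolding onec using a b0 by (simp add: field_simps)
  have e2: "(\<omega>\<^sup>2*nu + (h\<^sup>2/a)*Fy)/\<beta> = c0*nu + (h\<^sup>2/(a*\<beta>))*Fy"
    unfolding c0_def using a b0 by (simp add: field_simps)
  have S3b: "(1+c0)*(h\<^sup>2*nG) + (h\<^sup>2/a)*Fx/\<beta> \<le> c0*nu + (h\<^sup>2/(a*\<beta>))*Fy"
    using S3a unfolding e1 e2 .
  have Fb: "(h\<^sup>2/(a*\<beta>))*Fy \<le> 2*a*(1 + \<theta>p/(2*\<beta>))*Fy"
  proof -
    have "h\<^sup>2/(a*\<beta>) \<le> a\<^sup>2 * (2*\<beta> + \<theta>p/\<tau>)/(a*\<beta>)"
      using ss a b0 unfolding \<beta>_def by (intro divide_right_mono) auto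
    also have "\<dots> \<le> a\<^sup>2 * (2*\<beta> + \<theta>p)/(a*\<beta>)"
    proof -
      have "\<theta>p*1 \<le> \<theta>p*\<tau>" using thp tau by (intro mult_left_mono) auto
      then have "\<theta>p/\<tau> \<le> \<theta>p" using tau by (simp add: divide_le_eq)
      then show ?thesis using a b0 by (intro divide_right_mono mult_left_mono) auto
    qed
    also have "\<dots> = 2*a*(1 + \<theta>p/(2*\<beta>))" using a b0 by (simp add: field_simps power2_eq_square)
    finally show ?thesis using Fy0 by (intro mult_right_mono) auto
  qed
  have E2': "2*h*Fx \<le> 2*h*gd" using E2 h unfolding gd_def by simp
  have eqL: "(norm (d - h *\<^sub>R G))\<^sup>2 + c0 * (norm (h *\<^sub>R G))\<^sup>2 + 2*h*(1 + (h/a)/(2*\<beta>))*Fx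
      = nd - 2*h*gd + (1 + c0)*(h\<^sup>2*nG) + 2*h*Fx + (h\<^sup>2/a)*Fx/\<beta>"
    unfolding LHS1 LHS2 using a b0 by (simp add: field_simps power2_eq_square)
  have "(norm (d - h *\<^sub>R G))\<^sup>2 + c0 * (norm (h *\<^sub>R G))\<^sup>2 + 2*h*(1 + (h/a)/(2*\<beta>))*Fx
     \<le> (norm d)\<^sup>2 + c0 * (norm u)\<^sup>2 + 2*a*(1 + \<theta>p/(2*\<beta>))*Fy"
  proof -
    have eqs: "(norm d)\<^sup>2 = nd" "(norm u)\<^sup>2 = nu" by (simp_all add: nsq nd_def nu_def)
    show ?thesis unfolding eqL eqs using S3b Fb E2' by linarith
  qed
  then show ?thesis unfolding c0_def \<beta>_def .
qed

lemma energy0: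
  fixes d G :: "'a::real_inner" and h \<omega> \<theta>0 F :: real
  assumes h: "0 < h" and om: "0 < \<omega>" "\<omega>\<^sup>2 \<le> 1/2" and t0: "0 < \<theta>0" and F0: "0 \<le> F"
    and E2: "F \<le> G \<bullet> d"
  shows "(norm (d - h *\<^sub>R G))\<^sup>2 + (\<omega>\<^sup>2/(1-\<omega>\<^sup>2)) * (norm (h *\<^sub>R G))\<^sup>2 + 2*h*(1 + \<theta>0/(2*(1-\<omega>\<^sup>2)))*F
     \<le> (norm d)\<^sup>2 + 2*h\<^sup>2*(norm G)\<^sup>2 + 2*h*\<theta>0*F"
proof -
  define \<beta> where "\<beta> = 1 - \<omega>\<^sup>2"
  have b0: "1/2 \<le> \<beta>" "0 < \<beta>" using om unfolding \<beta>_def by auto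
  have nsq: "(norm v)\<^sup>2 = v \<bullet> v" for v :: 'a by (simp add: power2_norm_eq_inner)
  have LHS1: "(norm (d - h *\<^sub>R G))\<^sup>2 = (norm d)\<^sup>2 - 2*h*(G \<bullet> d) + h\<^sup>2*(norm G)\<^sup>2"
    unfolding nsq by (simp add: inner_diff_left inner_diff_right inner_commute power2_eq_square algebra_simps)
  have LHS2: "(norm (h *\<^sub>R G))\<^sup>2 = h\<^sup>2*(norm G)\<^sup>2" by (simp add: power2_eq_square)
  have c1: "1 + \<omega>\<^sup>2/\<beta> \<le> 2"
  proof -
    have "\<omega>\<^sup>2 \<le> \<beta>" unfolding \<beta>_def using om by simp
    then show ?thesis using b0 by (simp add: divide_le_eq)
  qed
  have c2: "\<theta>0/\<beta> \<le> 2*\<theta>0" using b0 t0 by (simp add: divide_le_eq)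
  have A: "(1 + \<omega>\<^sup>2/\<beta>)*(h\<^sup>2*(norm G)\<^sup>2) \<le> 2*(h\<^sup>2*(norm G)\<^sup>2)" using c1 by (intro mult_right_mono) auto
  have B: "(\<theta>0/\<beta>)*(h*F) \<le> (2*\<theta>0)*(h*F)" using c2 h F0 by (intro mult_right_mono) auto
  have E2': "2*h*F \<le> 2*h*(G \<bullet> d)" using E2 h by simp
  have eq: "(norm (d - h *\<^sub>R G))\<^sup>2 + (\<omega>\<^sup>2/\<beta>) * (norm (h *\<^sub>R G))\<^sup>2 + 2*h*(1 + \<theta>0/(2*\<beta>))*F
     = (norm d)\<^sup>2 - 2*h*(G \<bullet> d) + (1 + \<omega>\<^sup>2/\<beta>)*(h\<^sup>2*(norm G)\<^sup>2) + 2*h*F + (\<theta>0/\<beta>)*(h*F)"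
    unfolding LHS1 LHS2 using b0 by (simp add: field_simps)
  have "(norm (d - h *\<^sub>R G))\<^sup>2 + (\<omega>\<^sup>2/\<beta>) * (norm (h *\<^sub>R G))\<^sup>2 + 2*h*(1 + \<theta>0/(2*\<beta>))*F
     \<le> (norm d)\<^sup>2 + 2*h\<^sup>2*(norm G)\<^sup>2 + 2*h*\<theta>0*F"
    unfolding eq using A B E2' by (simp add: algebra_simps)
  then show ?thesis unfolding \<beta>_def .
qed

lemma grad_zero_at_min:
  fixes f :: "'a::real_inner \<Rightarrow> real"
  assumes grad: "\<And>z. (f has_derivative (\<lambda>h. g z \<bullet> h)) (at z)"
    and min: "\<And>y. f xs \<le> f y"
  shows "g xs = 0"
proof -
  have "(\<lambda>h. g xs \<bullet> h) = (\<lambda>h. 0)"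
    by (rule has_derivative_local_min[OF grad]) (simp add: min always_eventually)
  then have "g xs \<bullet> g xs = 0" by metis
  then show ?thesis by simp
qed

lemma argmin_unique:
  fixes f :: "'a::real_inner \<Rightarrow> real"
  assumes cvx: "convex_on UNIV f"
    and grad: "\<And>z. (f has_derivative (\<lambda>h. g z \<bullet> h)) (at z)"
    and lsc: "locally_strongly_convex f g"
    and xs: "xs \<in> argmin_set f"
  shows "argmin_set f = {xs}"
proof -
  have min: "\<And>y. f xs \<le> f y" using xs unfolding argmin_set_def by auto
  have g0: "g xs = 0" by (rule grad_zero_at_min[OF grad min])
  have "y = xs" if y: "y \<in> argmin_set f" for y
  proof (rule ccontr)
    assume ne: "y \<noteq> xs"
    have fy: "f y = f xs" using y min unfolding argmin_set_def by (auto intro: antisym)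
    obtain \<delta> \<mu> where d: "\<delta> > 0" "\<mu> > 0" and loc: "\<forall>p\<in>ball xs \<delta>. \<forall>r\<in>ball xs \<delta>.
        f p \<ge> f r + g r \<bullet> (p - r) + \<mu> / 2 * (norm (p - r))\<^sup>2"
      using lsc unfolding locally_strongly_convex_def by blast
    define n where "n = norm (y - xs)"
    have n0: "n > 0" unfolding n_def using ne by simp
    define t where "t = min (1/2) (\<delta> / (2*n))"
    have t0: "0 < t" "t \<le> 1/2" "t \<le> \<delta> / (2*n)" unfolding t_def using d n0 by auto
    define p where "p = xs + t *\<^sub>R (y - xs)"
    have np: "norm (p - xs) = t * n" unfolding p_def n_def using t0 by simp
    have "t * n \<le> \<delta>/2" using t0 n0 by (simp add: field_simps)
    then have pb: "p \<in> ball xs \<delta>" using np d by (simp add: dist_norm norm_minus_commute)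
    have xb: "xs \<in> ball xs \<delta>" using d by simp
    have "f p \<ge> f xs + g xs \<bullet> (p - xs) + \<mu> / 2 * (norm (p - xs))\<^sup>2" using loc pb xb by blast
    then have 1: "f p \<ge> f xs + \<mu> / 2 * (t*n)\<^sup>2" using g0 np by simp
    have "f p \<le> (1 - t) * f xs + t * f y"
    proof -
      have "p = (1 - t) *\<^sub>R xs + t *\<^sub>R y" unfolding p_def by (simp add: algebra_simps)
      then show ?thesis using convex_onD[OF cvx, of t xs y] t0 by simp
    qed
    then have "f p \<le> f xs" using fy by (simp add: algebra_simps)
    moreover have "0 < \<mu> / 2 * (t*n)\<^sup>2" using d t0 n0 by simp
    ultimately show False using 1 by linarith
  qed
  then have "argmin_set f \<subseteq> {xs}" by blast
  moreover have "{xs} \<subseteq> argmin_set f" using xs by simp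
  ultimately show ?thesis by (rule subset_antisym)
qed

theorem theorem4p5:
  fixes f :: "'a::euclidean_space \<Rightarrow> real" and g :: "'a \<Rightarrow> 'a"
    and x :: "nat \<Rightarrow> 'a" and \<alpha> \<theta> \<gamma> :: "nat \<Rightarrow> real"
    and \<tau> \<omega> \<gamma>min \<gamma>max R LW :: real and xstar :: 'a
  assumes cvx: "convex_on UNIV f"
    and grad: "\<And>z. (f has_derivative (\<lambda>h. g z \<bullet> h)) (at z)"
    and gcont: "continuous_on UNIV g"
    and lsc: "locally_strongly_convex f g"
    and llg: "locally_lipschitz_grad g"
    and nonempty: "argmin_set f \<noteq> {}"
    and a0: "\<alpha> 0 > 0" and t0: "\<theta> 0 > 0" and tau: "\<tau> > 1"
    and om: "0 < \<omega>" "\<omega> \<le> 1 / sqrt 2"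
    and gam: "0 < \<gamma>min" "\<gamma>min \<le> \<gamma>max" "\<And>k. \<gamma> k \<in> {\<gamma>min..\<gamma>max}"
    and iter: "\<And>k. x (Suc k) = x k - (\<alpha> k * \<gamma> k) *\<^sub>R g (x k)"
    and step: "\<And>k. k \<ge> 1 \<Longrightarrow>
       (let Lk = norm (g (x k) - g (x (k - 1))) / norm (x k - x (k - 1));
            A = \<alpha> (k - 1) * \<gamma> (k - 1) / \<gamma> k * sqrt (2 * (1 - \<omega>\<^sup>2) + \<theta> (k - 1) / \<tau>)
        in \<alpha> k = (if Lk = 0 then A else min A (\<omega> / (\<gamma> k * Lk))))"
    and theta: "\<And>k. k \<ge> 1 \<Longrightarrow> \<theta> k = \<alpha> k * \<gamma> k / (\<alpha> (k - 1) * \<gamma> (k - 1))"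
    and R: "R > 3 * sqrt (infdist (x 0) (argmin_set f) ^ 2
                 + 2 * \<alpha> 0 ^ 2 * \<gamma> 0 ^ 2 * norm (g (x 0)) ^ 2
                 + 2 * \<alpha> 0 * \<gamma> 0 * \<theta> 0 * (f (x 0) - opt_val f))
             + infdist (x 0) (argmin_set f) + norm (x 0)"
    and LW: "LW > 0" "\<And>y z. y \<in> cball 0 R \<Longrightarrow> z \<in> cball 0 R \<Longrightarrow> norm (g y - g z) \<le> LW * norm (y - z)"
    and xs: "xstar \<in> argmin_set f"
  shows "let \<mu>W = Inf {(g y - g z) \<bullet> (y - z) / (norm (y - z))\<^sup>2 | y z.
                         y \<in> cball 0 R \<and> z \<in> cball 0 R \<and> y \<noteq> z};
             fs = opt_val f;
             Lhat = (\<lambda>k. (norm (x (Suc k) - xstar))\<^sup>2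
                  + (\<omega>\<^sup>2 / (1 - \<omega>\<^sup>2) + \<mu>W / (2 * \<omega> * LW)) * (norm (x (Suc k) - x k))\<^sup>2
                  + 2 * \<alpha> k * \<gamma> k * (1 + \<theta> k / (2 * (1 - \<omega>\<^sup>2))) * (f (x k) - fs));
             m = min (\<alpha> 0 * \<gamma> 0 * \<mu>W / \<omega>) (\<mu>W / LW);
             q = min (min (\<mu>W / 2 * min (\<alpha> 0 * \<gamma> 0) (\<omega> / LW))
                          (\<mu>W * (1 - \<omega>\<^sup>2) / (2 * \<omega> ^ 3 * LW + \<mu>W * (1 - \<omega>\<^sup>2))))
                     ((\<tau> - 1) * m / (\<tau> * (2 * (1 - \<omega>\<^sup>2) + m)))
         in 0 < q \<and> q < 1 \<and> (\<forall>k\<ge>1. Lhat k \<le> (1 - q) * Lhat (k - 1))"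
  proof -
  define \<beta> where "\<beta> = 1 - \<omega>\<^sup>2"
  have om2: "\<omega>\<^sup>2 \<le> 1/2"
  proof -
    have "\<omega>\<^sup>2 \<le> (1 / sqrt 2)\<^sup>2" using om by (intro power_mono) auto
    then show ?thesis by (simp add: power_divide)
  qed
  have o1: "\<omega> < 1"
  proof (rule ccontr)
    assume "\<not> \<omega> < 1"
    then have "1*1 \<le> \<omega>*\<omega>" by (intro mult_mono) auto
    then show False using om2 by (simp add: power2_eq_square)
  qed
  have b0: "1/2 \<le> \<beta>" "\<beta> \<le> 1" "0 < \<beta>" using om2 unfolding \<beta>_def by auto
  define fs where "fs = opt_val f"
  have xmin: "\<And>y. f xstar \<le> f y" using xs unfolding argmin_set_def by auto
  have fs_eq: "fs = f xstar" unfolding fs_def opt_val_def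
    by (rule cInf_eq_minimum) (auto simp: xmin)
  have Fnn: "\<And>y. 0 \<le> f y - fs" using xmin fs_eq by simp
  have gx0: "g xstar = 0" by (rule grad_zero_at_min[OF grad xmin])
  have amin: "argmin_set f = {xstar}" by (rule argmin_unique[OF cvx grad lsc xs])
  have dist0: "infdist (x 0) (argmin_set f) = norm (x 0 - xstar)" unfolding amin by (simp add: dist_norm)
  have gi: "\<And>p r. f p + g p \<bullet> (r - p) \<le> f r" by (rule grad_ineq[OF cvx grad])
  have gmono: "\<And>p r. 0 \<le> (g p - g r) \<bullet> (p - r)"
  proof -
    fix p r
    have "f p + g p \<bullet> (r - p) \<le> f r" "f r + g r \<bullet> (p - r) \<le> f p" using gi by auto
    moreover have "g p \<bullet> (r - p) = - (g p \<bullet> (p - r))" by (simp add: inner_diff_right)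
    ultimately show "0 \<le> (g p - g r) \<bullet> (p - r)" by (simp add: inner_diff_left)
  qed
  define ag where "ag k = \<alpha> k * \<gamma> k" for k
  have gpos: "\<And>k. 0 < \<gamma> k" using gam by (meson atLeastAtMost_iff less_le_trans)
  define Lk where "Lk k = norm (g (x k) - g (x (k - 1))) / norm (x k - x (k - 1))" for k
  define A where "A k = \<alpha> (k - 1) * \<gamma> (k - 1) / \<gamma> k * sqrt (2 * (1 - \<omega>\<^sup>2) + \<theta> (k - 1) / \<tau>)" for k
  have stepk: "\<And>k. k \<ge> 1 \<Longrightarrow> \<alpha> k = (if Lk k = 0 then A k else min (A k) (\<omega> / (\<gamma> k * Lk k)))"
    using step unfolding Lk_def A_def Let_def by simp
  have Lk0: "\<And>k. 0 \<le> Lk k" unfolding Lk_def by simp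
  have pos: "0 < \<alpha> k \<and> 0 < \<theta> k" for k
  proof (induction k)
    case 0 then show ?case using a0 t0 by simp
  next
    case (Suc k)
    have Ap: "0 < A (Suc k)" unfolding A_def using Suc gpos tau b0 unfolding \<beta>_def
      by (intro mult_pos_pos divide_pos_pos) (auto intro!: add_pos_nonneg)
    have "0 < \<alpha> (Suc k)"
    proof (cases "Lk (Suc k) = 0")
      case True then show ?thesis using stepk[of "Suc k"] Ap by simp
    next
      case False
      then have "0 < Lk (Suc k)" using Lk0[of "Suc k"] by simp
      then have "0 < \<omega> / (\<gamma> (Suc k) * Lk (Suc k))" using om gpos by simp
      then show ?thesis using stepk[of "Suc k"] Ap False by simp
    qed
    moreover have "0 < \<theta> (Suc k)" using theta[of "Suc k"] \<open>0 < \<alpha> (Suc k)\<close> Suc gpos by simp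
    ultimately show ?case by simp
  qed
  have agpos: "\<And>k. 0 < ag k" unfolding ag_def using pos gpos by simp
  have thpos: "\<And>k. 0 < \<theta> k" using pos by simp
  have alA: "\<And>k. k \<ge> 1 \<Longrightarrow> \<alpha> k \<le> A k" using stepk by (simp split: if_splits)
  have ag_step: "ag k \<le> ag (k - 1) * sqrt (2 * (1 - \<omega>\<^sup>2) + \<theta> (k - 1) / \<tau>)" if k: "k \<ge> 1" for k
  proof -
    have "ag k \<le> A k * \<gamma> k" unfolding ag_def using alA[OF k] gpos[of k] by (intro mult_right_mono) auto
    also have "A k * \<gamma> k = ag (k - 1) * sqrt (2 * (1 - \<omega>\<^sup>2) + \<theta> (k - 1) / \<tau>)"
      unfolding A_def ag_def using gpos[of k] by simp
    finally show ?thesis .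
  qed
  have ag_sq: "(ag k)\<^sup>2 \<le> (ag (k - 1))\<^sup>2 * (2 * (1 - \<omega>\<^sup>2) + \<theta> (k - 1) / \<tau>)" if k: "k \<ge> 1" for k
  proof -
    have nn: "0 \<le> 2 * (1 - \<omega>\<^sup>2) + \<theta> (k - 1) / \<tau>" using b0 thpos[of "k-1"] tau unfolding \<beta>_def by simp
    have "(ag k)\<^sup>2 \<le> (ag (k - 1) * sqrt (2 * (1 - \<omega>\<^sup>2) + \<theta> (k - 1) / \<tau>))\<^sup>2"
      using ag_step[OF k] agpos[of k] by (intro power_mono) auto
    also have "\<dots> = (ag (k - 1))\<^sup>2 * (2 * (1 - \<omega>\<^sup>2) + \<theta> (k - 1) / \<tau>)"
      using nn by (simp add: power_mult_distrib)
    finally show ?thesis .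
  qed
  have ag_lip: "ag k * norm (g (x k) - g (x (k - 1))) \<le> \<omega> * norm (x k - x (k - 1))" if k: "k \<ge> 1" for k
  proof (cases "Lk k = 0")
    case True
    have "g (x k) - g (x (k - 1)) = 0"
    proof (cases "norm (x k - x (k - 1)) = 0")
      case True then show ?thesis by simp
    next
      case False
      then show ?thesis using \<open>Lk k = 0\<close> unfolding Lk_def by simp
    qed
    then show ?thesis using om by simp
  next
    case False
    then have nu: "norm (x k - x (k - 1)) \<noteq> 0" unfolding Lk_def by auto
    have Lp: "0 < Lk k" using False Lk0[of k] by simp
    have "\<alpha> k \<le> \<omega> / (\<gamma> k * Lk k)" using stepk[OF k] False by simp
    then have "\<alpha> k * (\<gamma> k * Lk k) \<le> \<omega>" using gpos[of k] Lp by (simp add: le_divide_eq)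
    then have "ag k * Lk k \<le> \<omega>" unfolding ag_def by (simp add: algebra_simps)
    then have "ag k * Lk k * norm (x k - x (k - 1)) \<le> \<omega> * norm (x k - x (k - 1))" by (intro mult_right_mono) auto
    moreover have "Lk k * norm (x k - x (k - 1)) = norm (g (x k) - g (x (k - 1)))" unfolding Lk_def using nu by simp
    moreover have "ag k * Lk k * norm (x k - x (k - 1)) = ag k * (Lk k * norm (x k - x (k - 1)))" by simp
    ultimately show ?thesis by metis
  qed
  have theta_eq: "\<theta> k = ag k / ag (k - 1)" if "k \<ge> 1" for k using theta[OF that] unfolding ag_def .
  have xstep: "x (Suc k) = x k - ag k *\<^sub>R g (x k)" for k using iter unfolding ag_def .
  have urel: "x k - x (k - 1) = - (ag (k - 1) *\<^sub>R g (x (k - 1)))" if "k \<ge> 1" for k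
    using xstep[of "k - 1"] that by simp
  define \<eta> where "\<eta> = infdist (x 0) (argmin_set f) ^ 2
                 + 2 * \<alpha> 0 ^ 2 * \<gamma> 0 ^ 2 * norm (g (x 0)) ^ 2
                 + 2 * \<alpha> 0 * \<gamma> 0 * \<theta> 0 * (f (x 0) - opt_val f)"
  have eta_eq: "\<eta> = (norm (x 0 - xstar))\<^sup>2 + 2*(ag 0)\<^sup>2*(norm (g (x 0)))\<^sup>2 + 2*ag 0*\<theta> 0*(f (x 0) - fs)"
    unfolding \<eta>_def dist0 ag_def fs_def by (simp add: power_mult_distrib)
  define E where "E k = (norm (x (Suc k) - xstar))\<^sup>2 + (\<omega>\<^sup>2/(1-\<omega>\<^sup>2)) * (norm (x (Suc k) - x k))\<^sup>2
      + 2*ag k*(1 + \<theta> k/(2*(1-\<omega>\<^sup>2)))*(f (x k) - fs)" for k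
  have nmG: "norm (x (Suc k) - x k) = norm (ag k *\<^sub>R g (x k))" for k
    using xstep[of k] by (simp add: norm_minus_commute)
  have dG: "x (Suc k) - xstar = (x k - xstar) - ag k *\<^sub>R g (x k)" for k
    using xstep[of k] by (simp add: algebra_simps)
  have E0: "E 0 \<le> \<eta>"
  proof -
    have "E 0 \<le> (norm (x 0 - xstar))\<^sup>2 + 2*(ag 0)\<^sup>2*(norm (g (x 0)))\<^sup>2 + 2*ag 0*\<theta> 0*(f (x 0) - fs)"
      unfolding E_def nmG dG
      by (rule energy0[OF agpos om(1) om2 thpos Fnn]) (use gi[of "x 0" xstar] fs_eq in \<open>simp add: inner_diff_right\<close>)
    then show ?thesis unfolding eta_eq .
  qed
  have Estep: "E k \<le> E (k - 1)" if k: "k \<ge> 1" for k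
  proof -
    have Sk: "Suc (k - 1) = k" using k by simp
    have "E k \<le> (norm (x k - xstar))\<^sup>2 + (\<omega>\<^sup>2/(1-\<omega>\<^sup>2)) * (norm (x k - x (k - 1)))\<^sup>2
        + 2*ag (k - 1)*(1 + \<theta> (k - 1)/(2*(1-\<omega>\<^sup>2)))*(f (x (k - 1)) - fs)"
      unfolding E_def nmG dG theta_eq[OF k]
    proof (rule energy_step[OF agpos agpos om(1) om2 tau _ urel[OF k] Fnn])
      show "0 \<le> \<theta> (k - 1)" using thpos less_imp_le by blast
      show "f (x k) - fs \<le> g (x k) \<bullet> (x k - xstar)"
        using gi[of "x k" xstar] fs_eq by (simp add: inner_diff_right)
      show "- (g (x k) \<bullet> (x k - x (k - 1))) \<le> f (x (k - 1)) - fs - (f (x k) - fs)"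
        using gi[of "x k" "x (k - 1)"] by (simp add: inner_diff_right)
      show "0 \<le> (g (x k) - g (x (k - 1))) \<bullet> (x k - x (k - 1))" by (rule gmono)
      show "ag k * norm (g (x k) - g (x (k - 1))) \<le> \<omega> * norm (x k - x (k - 1))" by (rule ag_lip[OF k])
      show "(ag k)\<^sup>2 \<le> (ag (k - 1))\<^sup>2 * (2 * (1 - \<omega>\<^sup>2) + \<theta> (k - 1) / \<tau>)" by (rule ag_sq[OF k])
    qed
    also have "\<dots> = E (k - 1)" unfolding E_def Sk ..
    finally show ?thesis .
  qed
  have Eb: "E k \<le> \<eta>" for k
  proof (induction k)
    case 0 then show ?case by (rule E0)
  next
    case (Suc k) then show ?case using Estep[of "Suc k"] by simp
  qed
  have eta0: "(norm (x 0 - xstar))\<^sup>2 \<le> \<eta>"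
  proof -
    have "0 \<le> 2*ag 0*\<theta> 0*(f (x 0) - fs)" using agpos[of 0] thpos[of 0] Fnn[of "x 0"] by (intro mult_nonneg_nonneg) auto
    then show ?thesis unfolding eta_eq by simp
  qed
  have xb2: "(norm (x k - xstar))\<^sup>2 \<le> \<eta>" for k
  proof (cases k)
    case 0 then show ?thesis using eta0 by simp
  next
    case (Suc j)
    have "0 \<le> (\<omega>\<^sup>2/(1-\<omega>\<^sup>2)) * (norm (x (Suc j) - x j))\<^sup>2" using b0 unfolding \<beta>_def by simp
    moreover have "0 \<le> 2*ag j*(1 + \<theta> j/(2*(1-\<omega>\<^sup>2)))*(f (x j) - fs)"
    proof -
      have "0 \<le> \<theta> j/(2*(1-\<omega>\<^sup>2))" using thpos[of j] b0 unfolding \<beta>_def by simp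
      then show ?thesis using agpos[of j] Fnn[of "x j"] by (intro mult_nonneg_nonneg) auto
    qed
    ultimately have "(norm (x (Suc j) - xstar))\<^sup>2 \<le> E j" unfolding E_def by linarith
    then show ?thesis using Eb[of j] Suc by simp
  qed
  have eta_nn: "0 \<le> \<eta>" using eta0 by (meson order_trans zero_le_power2)
  have xb: "norm (x k - xstar) \<le> sqrt \<eta>" for k using xb2[of k] by (simp add: real_le_rsqrt)
  define W where "W = cball (0::'a) R"
  have R': "R > 3 * sqrt \<eta> + norm (x 0 - xstar) + norm (x 0)" using R unfolding \<eta>_def dist0[symmetric] .
  have nxs: "norm xstar \<le> norm (x 0) + norm (x 0 - xstar)"
    using norm_triangle_ineq4[of "x 0" "x 0 - xstar"] by (simp add: norm_minus_commute)
  have inW: "p \<in> W" if "norm (p - xstar) \<le> 3 * sqrt \<eta>" for p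
  proof -
    have "norm p \<le> norm xstar + norm (p - xstar)" by (rule norm_triangle_sub)
    then show ?thesis unfolding W_def using that nxs R' by simp
  qed
  have sq0: "0 \<le> sqrt \<eta>" using eta_nn by simp
  have xW: "x k \<in> W" for k using inW[of "x k"] xb[of k] sq0 by simp
  have xsW: "xstar \<in> W" using inW[of xstar] sq0 by simp
  have R0: "0 < R" using R' sq0 norm_ge_zero[of "x 0 - xstar"] norm_ge_zero[of "x 0"] by linarith
  define S where "S = {(g y - g z) \<bullet> (y - z) / (norm (y - z))\<^sup>2 | y z.
                         y \<in> cball 0 R \<and> z \<in> cball 0 R \<and> y \<noteq> z}"
  define \<mu>W where "\<mu>W = Inf S"
  obtain \<mu>' where mu': "\<mu>' > 0" "\<forall>y\<in>W. \<forall>z\<in>W. \<mu>'*(norm (y - z))\<^sup>2 \<le> (g y - g z) \<bullet> (y - z)"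
    using mu_pos[OF lsc[unfolded locally_strongly_convex_def] compact_cball convex_cball, of 0 R] unfolding W_def by blast
  obtain b :: 'a where bB: "b \<in> Basis" using nonempty_Basis by blast
  define z0 where "z0 = (R/2) *\<^sub>R b"
  have nz0: "norm z0 = R/2" unfolding z0_def using bB R0 by simp
  have z0W: "z0 \<in> cball 0 R" using nz0 R0 by simp
  have z0ne: "z0 \<noteq> 0" using nz0 R0 by auto
  have "\<exists>y z. (g z0 - g 0) \<bullet> (z0 - 0) / (norm (z0 - 0))\<^sup>2 = (g y - g z) \<bullet> (y - z) / (norm (y - z))\<^sup>2
      \<and> y \<in> cball 0 R \<and> z \<in> cball 0 R \<and> y \<noteq> z"
    using z0W z0ne R0 by (intro exI[of _ z0] exI[of _ 0]) auto
  then have e0S: "(g z0 - g 0) \<bullet> (z0 - 0) / (norm (z0 - 0))\<^sup>2 \<in> S" unfolding S_def by blast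
  have Sne: "S \<noteq> {}" using e0S by blast
  have Slow: "\<mu>' \<le> v" if vS: "v \<in> S" for v
  proof -
    obtain y z where yz: "v = (g y - g z) \<bullet> (y - z) / (norm (y - z))\<^sup>2" "y \<in> W" "z \<in> W" "y \<noteq> z"
      using vS unfolding S_def W_def by blast
    have "0 < (norm (y - z))\<^sup>2" using yz by simp
    then show ?thesis using mu'(2) yz by (simp add: pos_le_divide_eq)
  qed
  have bdd: "bdd_below S" using Slow by (rule bdd_belowI)
  have muW_pos: "0 < \<mu>W"
  proof -
    have "\<mu>' \<le> \<mu>W" unfolding \<mu>W_def using Sne Slow by (rule cInf_greatest)
    then show ?thesis using mu' by simp
  qed
  have muW_le: "\<mu>W \<le> LW"
  proof -
    have "(g z0 - g 0) \<bullet> z0 \<le> norm (g z0 - g 0) * norm z0" by (rule norm_cauchy_schwarz)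
    also have "\<dots> \<le> LW * norm z0 * norm z0" using LW(2)[of z0 0] z0W R0 by (intro mult_right_mono) auto
    finally have "(g z0 - g 0) \<bullet> z0 \<le> LW * (norm z0)\<^sup>2" by (simp add: power2_eq_square algebra_simps)
    then have "(g z0 - g 0) \<bullet> (z0 - 0) / (norm (z0 - 0))\<^sup>2 \<le> LW" using z0ne by (simp add: divide_le_eq)
    moreover have "\<mu>W \<le> (g z0 - g 0) \<bullet> (z0 - 0) / (norm (z0 - 0))\<^sup>2" unfolding \<mu>W_def using e0S bdd by (rule cInf_lower)
    ultimately show ?thesis by linarith
  qed
  have monoW: "\<mu>W * (norm (y - z))\<^sup>2 \<le> (g y - g z) \<bullet> (y - z)" if "y \<in> W" "z \<in> W" for y z
  proof (cases "y = z")
    case True then show ?thesis by simp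
  next
    case False
    have "(g y - g z) \<bullet> (y - z) / (norm (y - z))\<^sup>2 \<in> S" unfolding S_def using that False unfolding W_def by blast
    then have "\<mu>W \<le> (g y - g z) \<bullet> (y - z) / (norm (y - z))\<^sup>2" unfolding \<mu>W_def using bdd by (rule cInf_lower)
    moreover have "0 < (norm (y - z))\<^sup>2" using False by simp
    ultimately show ?thesis by (simp add: le_divide_eq)
  qed
  have cW: "convex W" unfolding W_def by simp
  have strongW: "f z + g z \<bullet> (y - z) + \<mu>W/2*(norm (y - z))\<^sup>2 \<le> f y" if "y \<in> W" "z \<in> W" for y z
    by (rule strong_from_mono[OF grad cW that]) (rule monoW)
  have descW: "f y \<le> f z + g z \<bullet> (y - z) + LW/2*(norm (y - z))\<^sup>2" if "y \<in> W" "z \<in> W" for y z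
    by (rule descent[OF grad cW that]) (use LW(2) in \<open>auto simp: W_def\<close>)
  have LkW: "Lk k \<le> LW" if k: "k \<ge> 1" for k
  proof (cases "norm (x k - x (k - 1)) = 0")
    case True then show ?thesis unfolding Lk_def using LW by simp
  next
    case False
    have "norm (g (x k) - g (x (k - 1))) \<le> LW * norm (x k - x (k - 1))" using LW(2) xW unfolding W_def by blast
    then show ?thesis unfolding Lk_def using False by (simp add: divide_le_eq)
  qed
  define m0 where "m0 = min (ag 0) (\<omega> / LW)"
  have m0pos: "0 < m0" unfolding m0_def using agpos om LW by simp
  have agmin: "m0 \<le> ag k" for k
  proof (induction k)
    case 0 then show ?case unfolding m0_def by simp
  next
    case (Suc k)
    have sq1: "1 \<le> sqrt (2 * (1 - \<omega>\<^sup>2) + \<theta> k / \<tau>)"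
    proof -
      have "0 \<le> \<theta> k / \<tau>" using thpos[of k] tau by simp
      moreover have "1 \<le> 2 * (1 - \<omega>\<^sup>2)" using om2 by simp
      ultimately have "1 \<le> 2 * (1 - \<omega>\<^sup>2) + \<theta> k / \<tau>" by simp
      then show ?thesis by simp
    qed
    have Ag: "A (Suc k) * \<gamma> (Suc k) = ag k * sqrt (2 * (1 - \<omega>\<^sup>2) + \<theta> k / \<tau>)"
      unfolding A_def ag_def using gpos[of "Suc k"] by simp
    have Ag2: "ag k \<le> A (Suc k) * \<gamma> (Suc k)" unfolding Ag using sq1 agpos[of k]
      by (metis mult_le_cancel_left1 less_le_not_le)
    show ?case
    proof (cases "Lk (Suc k) = 0")
      case True
      then have "ag (Suc k) = A (Suc k) * \<gamma> (Suc k)" using stepk[of "Suc k"] unfolding ag_def by simp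
      then show ?thesis using Ag2 Suc by simp
    next
      case False
      have Lp: "0 < Lk (Suc k)" using False Lk0[of "Suc k"] by simp
      have al: "\<alpha> (Suc k) = min (A (Suc k)) (\<omega> / (\<gamma> (Suc k) * Lk (Suc k)))" using stepk[of "Suc k"] False by simp
      show ?thesis
      proof (cases "A (Suc k) \<le> \<omega> / (\<gamma> (Suc k) * Lk (Suc k))")
        case True
        then have "ag (Suc k) = A (Suc k) * \<gamma> (Suc k)" using al unfolding ag_def by simp
        then show ?thesis using Ag2 Suc by simp
      next
        case False
        then have "ag (Suc k) = \<omega> / (\<gamma> (Suc k) * Lk (Suc k)) * \<gamma> (Suc k)" using al unfolding ag_def by simp
        also have "\<dots> = \<omega> / Lk (Suc k)" using gpos[of "Suc k"] by simp
        finally have agL: "ag (Suc k) = \<omega> / Lk (Suc k)" .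
        have "\<omega> / LW \<le> \<omega> / Lk (Suc k)" using LkW[of "Suc k"] Lp om by (intro divide_left_mono) auto
        then show ?thesis unfolding agL m0_def by simp
      qed
    qed
  qed
  define c where "c = \<omega>\<^sup>2 / (1 - \<omega>\<^sup>2) + \<mu>W / (2 * \<omega> * LW)"
  define Lhat where "Lhat = (\<lambda>k. (norm (x (Suc k) - xstar))\<^sup>2
                  + (\<omega>\<^sup>2 / (1 - \<omega>\<^sup>2) + \<mu>W / (2 * \<omega> * LW)) * (norm (x (Suc k) - x k))\<^sup>2
                  + 2 * \<alpha> k * \<gamma> k * (1 + \<theta> k / (2 * (1 - \<omega>\<^sup>2))) * (f (x k) - fs))"
  define m where "m = min (\<alpha> 0 * \<gamma> 0 * \<mu>W / \<omega>) (\<mu>W / LW)"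
  define q1 where "q1 = \<mu>W / 2 * min (\<alpha> 0 * \<gamma> 0) (\<omega> / LW)"
  define q2 where "q2 = \<mu>W * (1 - \<omega>\<^sup>2) / (2 * \<omega> ^ 3 * LW + \<mu>W * (1 - \<omega>\<^sup>2))"
  define q3 where "q3 = (\<tau> - 1) * m / (\<tau> * (2 * (1 - \<omega>\<^sup>2) + m))"
  define q where "q = min (min q1 q2) q3"
  have q1m0: "q1 = \<mu>W/2*m0" unfolding q1_def m0_def ag_def ..
  have mpos: "0 < m" unfolding m_def using a0 gpos[of 0] muW_pos om LW by simp
  have q1pos: "0 < q1" unfolding q1m0 using muW_pos m0pos by simp
  have q2pos: "0 < q2" unfolding q2_def using muW_pos b0 om LW unfolding \<beta>_def by (intro divide_pos_pos mult_pos_pos add_pos_pos) auto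
  have q3pos: "0 < q3" unfolding q3_def using tau mpos b0 unfolding \<beta>_def by (intro divide_pos_pos mult_pos_pos add_pos_pos) auto
  have qpos: "0 < q" unfolding q_def using q1pos q2pos q3pos by simp
  have qle1: "q \<le> q1" "q \<le> q2" "q \<le> q3" unfolding q_def by auto
  have q3le: "q3 \<le> 1 - 1/\<tau>"
  proof -
    have den: "0 < 2 * (1 - \<omega>\<^sup>2) + m" using b0 mpos unfolding \<beta>_def by simp
    have "m / (2 * (1 - \<omega>\<^sup>2) + m) \<le> 1" using den b0 unfolding \<beta>_def by simp
    then have "(\<tau> - 1)/\<tau> * (m / (2 * (1 - \<omega>\<^sup>2) + m)) \<le> (\<tau> - 1)/\<tau> * 1"
      using tau by (intro mult_left_mono) auto
    moreover have "q3 = (\<tau> - 1)/\<tau> * (m / (2 * (1 - \<omega>\<^sup>2) + m))" unfolding q3_def by simp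
    moreover have "(\<tau> - 1)/\<tau> = 1 - 1/\<tau>" using tau by (simp add: diff_divide_distrib)
    ultimately show ?thesis by simp
  qed
  have qlt1: "q < 1"
  proof -
    have "q1 \<le> \<mu>W/2*(\<omega>/LW)" unfolding q1_def using muW_pos by (intro mult_left_mono) auto
    also have "\<dots> \<le> LW/2*(\<omega>/LW)" using muW_le om LW by (intro mult_right_mono) auto
    also have "\<dots> = \<omega>/2" using LW by simp
    finally show ?thesis using qle1 o1 by linarith
  qed
  have mainstep: "Lhat k \<le> (1 - q) * Lhat (k - 1)" if k: "k \<ge> 1" for k
  proof -
    have Sk: "Suc (k - 1) = k" using k by simp
    have tk: "\<theta> k = ag k / ag (k - 1)" by (rule theta_eq[OF k])
    have xkW: "x k \<in> W" and xk1W: "x (k - 1) \<in> W" using xW by auto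
    have F3: "f (x k) - fs + (norm (g (x k)))\<^sup>2 / (2 * LW) \<le> g (x k) \<bullet> (x k - xstar)"
    proof -
      define G where "G = g (x k)"
      define y where "y = xstar + (1/LW) *\<^sub>R G"
      have nG: "norm G \<le> LW * norm (x k - xstar)" unfolding G_def using LW(2) xkW xsW gx0 unfolding W_def by fastforce
      have "norm (y - xstar) = norm G / LW" unfolding y_def using LW by simp
      also have "\<dots> \<le> norm (x k - xstar)" using nG LW by (simp add: divide_le_eq mult.commute)
      also have "\<dots> \<le> sqrt \<eta>" by (rule xb)
      finally have "norm (y - xstar) \<le> 3 * sqrt \<eta>" using sq0 by linarith
      then have yW: "y \<in> W" by (rule inW)
      have d1: "f y \<le> f xstar + g xstar \<bullet> (y - xstar) + LW/2*(norm (y - xstar))\<^sup>2" by (rule descW[OF yW xsW])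
      have d2: "f (x k) + G \<bullet> (y - x k) \<le> f y" unfolding G_def by (rule gi)
      define Q where "Q = (norm G)\<^sup>2 / (2*LW)"
      have e1: "LW/2*(norm (y - xstar))\<^sup>2 = Q" unfolding Q_def y_def using LW by (simp add: power2_eq_square field_simps)
      have e2: "G \<bullet> (y - x k) = G \<bullet> (xstar - x k) + 2*Q"
        unfolding y_def Q_def using LW by (simp add: inner_add_right inner_diff_right power2_norm_eq_inner algebra_simps)
      have e3: "G \<bullet> (xstar - x k) = - (G \<bullet> (x k - xstar))" by (simp add: inner_diff_right)
      have d1': "f y \<le> f xstar + Q" using d1 e1 gx0 by simp
      have d2': "f (x k) - G \<bullet> (x k - xstar) + 2*Q \<le> f y" using d2 unfolding e2 e3 by simp
      have "f (x k) - fs + Q \<le> G \<bullet> (x k - xstar)" using d1' d2' fs_eq by linarith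
      then show ?thesis unfolding Q_def G_def .
    qed
    have "(norm ((x k - xstar) - ag k *\<^sub>R g (x k)))\<^sup>2 + (\<omega>\<^sup>2/(1-\<omega>\<^sup>2) + \<mu>W/(2*\<omega>*LW)) * (norm (ag k *\<^sub>R g (x k)))\<^sup>2
           + 2*ag k*(1 + (ag k/ag (k - 1))/(2*(1-\<omega>\<^sup>2)))*(f (x k) - fs)
         \<le> (1-q) * ((norm (x k - xstar))\<^sup>2 + (\<omega>\<^sup>2/(1-\<omega>\<^sup>2) + \<mu>W/(2*\<omega>*LW)) * (norm (x k - x (k - 1)))\<^sup>2
           + 2*ag (k - 1)*(1 + \<theta> (k - 1)/(2*(1-\<omega>\<^sup>2)))*(f (x (k - 1)) - fs))"
    proof (rule one_step[OF agpos agpos muW_pos muW_le om(1) om2 tau _ urel[OF k] Fnn Fnn _ F3])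
      show "0 \<le> \<theta> (k - 1)" using thpos less_imp_le by blast
      show "f (x k) - fs + \<mu>W / 2 * (norm (x k - xstar))\<^sup>2 \<le> g (x k) \<bullet> (x k - xstar)"
        using strongW[OF xsW xkW] fs_eq by (simp add: inner_diff_right norm_minus_commute)
      show "- (g (x k) \<bullet> (x k - x (k - 1))) + \<mu>W / 2 * (norm (x k - x (k - 1)))\<^sup>2 \<le> f (x (k - 1)) - fs - (f (x k) - fs)"
        using strongW[OF xk1W xkW] by (simp add: inner_diff_right norm_minus_commute)
      show "f (x (k - 1)) - fs \<le> g (x (k - 1)) \<bullet> (x k - xstar - (x k - x (k - 1))) - \<mu>W / 2 * (norm (x k - xstar - (x k - x (k - 1))))\<^sup>2"
        using strongW[OF xsW xk1W] fs_eq by (simp add: inner_diff_right norm_minus_commute)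
      show "\<mu>W * (norm (x k - x (k - 1)))\<^sup>2 \<le> (g (x k) - g (x (k - 1))) \<bullet> (x k - x (k - 1))" by (rule monoW[OF xkW xk1W])
      show "ag k * norm (g (x k) - g (x (k - 1))) \<le> \<omega> * norm (x k - x (k - 1))" by (rule ag_lip[OF k])
      show "(ag k)\<^sup>2 \<le> (ag (k - 1))\<^sup>2 * (2 * (1 - \<omega>\<^sup>2) + \<theta> (k - 1) / \<tau>)" by (rule ag_sq[OF k])
      show "0 < m0" by (rule m0pos)
      show "m0 \<le> ag k" "m0 \<le> ag (k - 1)" by (rule agmin)+
      show "0 < q" by (rule qpos)
      show "q \<le> \<mu>W / 2 * m0" using qle1 q1m0 by simp
      show "q \<le> \<mu>W * (1 - \<omega>\<^sup>2) / (2 * \<omega> ^ 3 * LW + \<mu>W * (1 - \<omega>\<^sup>2))" using qle1 unfolding q2_def by simp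
      show "q \<le> 1 - 1 / \<tau>" using qle1 q3le by simp
    qed
    moreover have "Lhat k = (norm ((x k - xstar) - ag k *\<^sub>R g (x k)))\<^sup>2 + (\<omega>\<^sup>2/(1-\<omega>\<^sup>2) + \<mu>W/(2*\<omega>*LW)) * (norm (ag k *\<^sub>R g (x k)))\<^sup>2
           + 2*ag k*(1 + (ag k/ag (k - 1))/(2*(1-\<omega>\<^sup>2)))*(f (x k) - fs)"
    proof -
      have "Lhat k = (norm (x (Suc k) - xstar))\<^sup>2 + (\<omega>\<^sup>2/(1-\<omega>\<^sup>2) + \<mu>W/(2*\<omega>*LW)) * (norm (x (Suc k) - x k))\<^sup>2
           + 2*ag k*(1 + \<theta> k/(2*(1-\<omega>\<^sup>2)))*(f (x k) - fs)"
        unfolding Lhat_def ag_def by (simp add: mult.assoc)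
      then show ?thesis unfolding dG nmG tk .
    qed
    moreover have "Lhat (k - 1) = (norm (x k - xstar))\<^sup>2 + (\<omega>\<^sup>2/(1-\<omega>\<^sup>2) + \<mu>W/(2*\<omega>*LW)) * (norm (x k - x (k - 1)))\<^sup>2
           + 2*ag (k - 1)*(1 + \<theta> (k - 1)/(2*(1-\<omega>\<^sup>2)))*(f (x (k - 1)) - fs)"
      unfolding Lhat_def Sk ag_def by simp
    ultimately show ?thesis by simp
  qed
  have final: "0 < q \<and> q < 1 \<and> (\<forall>k\<ge>1. Lhat k \<le> (1 - q) * Lhat (k - 1))"
    using qpos qlt1 mainstep by blast
  show ?thesis
    using final unfolding Let_def q_def q1_def q2_def q3_def m_def Lhat_def \<mu>W_def S_def fs_def .
qed

end
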